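(* Let $g\geq1$. The group $\mathbb{H}_g$ is isomorphic to $$\pi_1(\Sigma_{g,1})\times\langle\sigma\rangle\big/\big\langle [\alpha,\beta]=\sigma^{2\omega(\alpha,\beta)}\ \forall \alpha,\beta\in\pi_1(\Sigma_{g,1})\big\rangle,$$ via the map sending the standard generators $\alpha_i,\beta_i$ to $a_i,b_i$ and $\sigma$ to $\sigma$. Moreover, the kernel of the surjection $\varphi_1^{\mathbb{H}_g}:\pi_1(\Sigma_{g,1})\to\mathbb{H}_g$, $\alpha_i\mapsto a_i$, $\beta_i\mapsto b_i$, is stable under the action of $\mathrm{Mod}(\Sigma_{g,1})$.
   Context: $\Sigma_{g,1}$ is a compact connected oriented surface of genus $g$ with one boundary component; $\mathrm{Mod}(\Sigma_{g,1})$ is the group of isotopy classes of orientation-preserving homeomorphisms fixing the boundary pointwise, acting on $\pi_1(\Sigma_{g,1},\xi_1)$ for a base point $\xi_1\in\partial\Sigma_{g,1}$. $\pi_1(\Sigma_{g,1},\xi_1)$ is free on standard generators $\alpha_1,\beta_1,\dots,\alpha_g,\beta_g$, where $\alpha_i,\beta_i$ have algebraic intersection $1$ and distinct pairs are disjoint. $\omega$ denotes the algebraic intersection form on $H_1(\Sigma_{g,1};\mathbb{Z})$, evaluated on homology classes of loops. $\mathbb{H}_g=\langle a_1,b_1,\dots,a_g,b_g,\sigma\mid [a_i,a_j],[b_i,b_j],[\sigma,a_i],[\sigma,b_i],[a_i,b_j]\sigma^{-2\delta_{ij}}\rangle$. *)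

theory Defs
  imports "HOL-Algebra.Algebra"
begin

text \<open>A letter is a pair (generator, exponent sign); True means exponent +1,
  False means exponent -1.\<close>

type_synonym 'a fword = "('a \<times> bool) list"

fun red :: "'a fword \<Rightarrow> 'a fword" where
  "red [] = []"
| "red (x # xs) = (case red xs of
      [] \<Rightarrow> [x]
    | y # ys \<Rightarrow> (if fst x = fst y \<and> snd x \<noteq> snd y then ys else x # y # ys))"

definition free_group :: "'a set \<Rightarrow> 'a fword monoid" where
  "free_group Y = \<lparr> carrier = {w. red w = w \<and> fst ` set w \<subseteq> Y},
                    monoid.mult = (\<lambda>u v. red (u @ v)),
                    one = [] \<rparr>"

definition winv :: "'a fword \<Rightarrow> 'a fword" where
  "winv w = rev (map (\<lambda>(x, b). (x, \<not> b)) w)"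

text \<open>Commutator convention: [x,y] = x y x^{-1} y^{-1}.\<close>
definition wcomm :: "'a fword \<Rightarrow> 'a fword \<Rightarrow> 'a fword" where
  "wcomm u v = red (u @ v @ winv u @ winv v)"

definition normal_closure :: "('a, 'b) monoid_scheme \<Rightarrow> 'a set \<Rightarrow> 'a set" where
  "normal_closure G S =
     generate G {g \<otimes>\<^bsub>G\<^esub> s \<otimes>\<^bsub>G\<^esub> inv\<^bsub>G\<^esub> g | g s. g \<in> carrier G \<and> s \<in> S}"

definition presented_group :: "'a set \<Rightarrow> 'a fword set \<Rightarrow> 'a fword set monoid" where
  "presented_group Y R = free_group Y Mod normal_closure (free_group Y) (red ` R)"

definition pres_class :: "'a set \<Rightarrow> 'a fword set \<Rightarrow> 'a fword \<Rightarrow> 'a fword set" where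
  "pres_class Y R w = normal_closure (free_group Y) (red ` R) #>\<^bsub>free_group Y\<^esub> red w"

datatype gen = A nat | B nat | Sig

text \<open>Standard generators alpha_i = A i, beta_i = B i (i = 1..g) of the free group
  pi_1(Sigma_{g,1}); and a_i = A i, b_i = B i, sigma = Sig in H_g.\<close>

definition surf_gens :: "nat \<Rightarrow> gen set" where
  "surf_gens g = {A i | i. i \<in> {1..g}} \<union> {B i | i. i \<in> {1..g}}"

definition pi1 :: "nat \<Rightarrow> gen fword monoid" where
  "pi1 g = free_group (surf_gens g)"

definition lett :: "gen \<Rightarrow> gen fword" where
  "lett x = [(x, True)]"

text \<open>Exponent sum of a generator in a word (= coordinate of the homology class).\<close>
definition expsum :: "gen fword \<Rightarrow> gen \<Rightarrow> int" where
  "expsum w x = (\<Sum>l\<leftarrow>w. if fst l = x then (if snd l then 1 else -1) else 0)"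

definition omega :: "nat \<Rightarrow> gen fword \<Rightarrow> gen fword \<Rightarrow> int" where
  "omega g u v = (\<Sum>i\<in>{1..g}. expsum u (A i) * expsum v (B i) - expsum u (B i) * expsum v (A i))"

definition Hg_gens :: "nat \<Rightarrow> gen set" where
  "Hg_gens g = surf_gens g \<union> {Sig}"

definition Hg_rels :: "nat \<Rightarrow> gen fword set" where
  "Hg_rels g =
     {wcomm (lett (A i)) (lett (A j)) | i j. i \<in> {1..g} \<and> j \<in> {1..g}}
   \<union> {wcomm (lett (B i)) (lett (B j)) | i j. i \<in> {1..g} \<and> j \<in> {1..g}}
   \<union> {wcomm (lett Sig) (lett (A i)) | i. i \<in> {1..g}}
   \<union> {wcomm (lett Sig) (lett (B i)) | i. i \<in> {1..g}}
   \<union> {wcomm (lett (A i)) (lett (B j)) @ (if i = j then [(Sig, False), (Sig, False)] else [])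
       | i j. i \<in> {1..g} \<and> j \<in> {1..g}}"

definition Hgrp :: "nat \<Rightarrow> gen fword set monoid" where
  "Hgrp g = presented_group (Hg_gens g) (Hg_rels g)"

definition Hclass :: "nat \<Rightarrow> gen fword \<Rightarrow> gen fword set" where
  "Hclass g w = pres_class (Hg_gens g) (Hg_rels g) w"

text \<open>The infinite cyclic group <sigma> is modelled by (Z,+), sigma^k = k.\<close>
definition PxS :: "nat \<Rightarrow> (gen fword \<times> int) monoid" where
  "PxS g = pi1 g \<times>\<times> integer_group"

definition Qrel :: "nat \<Rightarrow> (gen fword \<times> int) set" where
  "Qrel g = {(wcomm u v, - 2 * omega g u v) | u v. u \<in> carrier (pi1 g) \<and> v \<in> carrier (pi1 g)}"

definition Qgrp :: "nat \<Rightarrow> (gen fword \<times> int) set monoid" where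
  "Qgrp g = PxS g Mod normal_closure (PxS g) (Qrel g)"

definition Qclass :: "nat \<Rightarrow> gen fword \<times> int \<Rightarrow> (gen fword \<times> int) set" where
  "Qclass g x = normal_closure (PxS g) (Qrel g) #>\<^bsub>PxS g\<^esub> x"

text \<open>phi_1 : pi_1 -> H_g, alpha_i -> a_i, beta_i -> b_i (words in A,B are words in H_g).\<close>
definition phi1 :: "nat \<Rightarrow> gen fword \<Rightarrow> gen fword set" where
  "phi1 g w = Hclass g w"

definition boundary_word :: "nat \<Rightarrow> gen fword" where
  "boundary_word g = red (concat (map (\<lambda>i. wcomm (lett (A i)) (lett (B i))) [1..<g+1]))"

text \<open>Action of Mod(Sigma_{g,1}) on pi_1 (Dehn--Nielsen--Baer / Zieschang): the
  automorphisms of the free group pi_1(Sigma_{g,1}, xi_1) fixing the boundary word.\<close>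
definition mcg_action :: "nat \<Rightarrow> (gen fword \<Rightarrow> gen fword) set" where
  "mcg_action g = {\<psi>. \<psi> \<in> iso (pi1 g) (pi1 g) \<and> \<psi> (boundary_word g) = boundary_word g}"

end

theory Submission
  imports Defs
begin

definition canc :: "'a \<times> bool \<Rightarrow> 'a \<times> bool \<Rightarrow> bool" where
  "canc x y \<longleftrightarrow> fst x = fst y \<and> snd x \<noteq> snd y"

definition fcons :: "'a \<times> bool \<Rightarrow> 'a fword \<Rightarrow> 'a fword" where
  "fcons x r = (case r of [] \<Rightarrow> [x] | y # ys \<Rightarrow> (if fst x = fst y \<and> snd x \<noteq> snd y then ys else x # y # ys))"

lemma red_Cons: "red (x # xs) = fcons x (red xs)"
  by (simp add: fcons_def)

lemma fcons_Nil[simp]: "fcons x [] = [x]" by (simp add: fcons_def)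
lemma fcons_Cons[simp]: "fcons x (y # ys) = (if canc x y then ys else x # y # ys)"
  by (simp add: fcons_def canc_def)

declare red.simps(2)[simp del]

lemma length_red: "length (red w) \<le> length w"
proof (induction w)
  case (Cons x xs) then show ?case
    by (cases "red xs") (auto simp: red_Cons)
qed simp

lemma set_red: "set (red w) \<subseteq> set w"
proof (induction w)
  case (Cons x xs) then show ?case
    by (cases "red xs") (auto simp: red_Cons)
qed simp

lemma red_tail: "red (x # w) = x # w \<Longrightarrow> red w = w"
proof (cases "red w")
  case Nil
  assume "red (x # w) = x # w"
  then show ?thesis using Nil by (simp add: red_Cons)
next
  case (Cons z zs)
  assume e: "red (x # w) = x # w"
  show ?thesis
  proof (cases "canc x z")
    case True
    then have "zs = x # w" using e Cons by (simp add: red_Cons)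
    then have "length (red w) > length w" using Cons by simp
    then show ?thesis using length_red[of w] by simp
  next
    case False
    then show ?thesis using e Cons by (simp add: red_Cons)
  qed
qed

lemma red_red[simp]: "red (red w) = red w"
proof (induction w)
  case Nil then show ?case by simp
next
  case (Cons x xs)
  show ?case
  proof (cases "red xs")
    case Nil then show ?thesis by (simp add: red_Cons)
  next
    case (Cons y ys)
    have e: "red (y # ys) = y # ys" using Cons.IH Cons by simp
    show ?thesis
    proof (cases "canc x y")
      case True
      have "red ys = ys" using red_tail[OF e] .
      then show ?thesis using True Cons by (simp add: red_Cons)
    next
      case False
      have "red (x # y # ys) = fcons x (y # ys)" using e by (simp add: red_Cons)
      also have "\<dots> = x # y # ys" using False by simp
      finally show ?thesis using False Cons by (simp add: red_Cons)
    qed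
  qed
qed

lemma red_Cons_red: "red (x # red w) = red (x # w)"
  by (simp add: red_Cons red_red)

lemma red_cancel: "canc x y \<Longrightarrow> red (x # y # ys) = red ys"
proof -
  assume a: "canc x y"
  show ?thesis
  proof (cases "red ys")
    case Nil then show ?thesis using a by (simp add: red_Cons)
  next
    case (Cons z zs)
    have rz: "red (z # zs) = z # zs" using Cons red_red[of ys] by simp
    have rzs: "red zs = zs" using red_tail[OF rz] .
    show ?thesis
    proof (cases "canc y z")
      case True
      then have xz: "x = z" using a by (cases x, cases z) (auto simp: canc_def)
      have "fcons z zs = z # zs" using rz rzs by (simp add: red_Cons)
      then show ?thesis using True Cons xz a by (simp add: red_Cons)
    next
      case False
      then show ?thesis using Cons a by (simp add: red_Cons)
    qed
  qed
qed


lemma red_append_cancel: "canc x y \<Longrightarrow> red (u @ x # y # v) = red (u @ v)"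
proof (induction u)
  case Nil then show ?case by (simp add: red_cancel)
next
  case (Cons z u) then show ?case by (simp add: red_Cons)
qed

lemma red_append_right: "red (u @ red v) = red (u @ v)"
  by (induction u) (simp_all add: red_red red_Cons)

lemma red_append_left: "red (red u @ v) = red (u @ v)"
proof (induction u)
  case Nil then show ?case by simp
next
  case (Cons x u)
  have "red ((x # u) @ v) = fcons x (red (red u @ v))" using Cons by (simp add: red_Cons)
  also have "\<dots> = red (red (x # u) @ v)"
  proof (cases "red u")
    case Nil then show ?thesis by (simp add: red_Cons)
  next
    case (Cons y ys)
    show ?thesis
    proof (cases "canc x y")
      case True
      have "fcons x (red (red u @ v)) = red (x # y # ys @ v)" using Cons by (simp only: red_Cons append_Cons)
      also have "\<dots> = red (ys @ v)" using True by (rule red_cancel)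
      moreover have "red (x # u) = ys" using Cons True by (simp add: red_Cons)
      ultimately show ?thesis by simp
    next
      case False
      then show ?thesis using Cons by (simp add: red_Cons)
    qed
  qed
  finally show ?case ..
qed

definition linv :: "'a \<times> bool \<Rightarrow> 'a \<times> bool" where
  "linv x = (fst x, \<not> snd x)"

lemma canc_linv[simp]: "canc x (linv x)" "canc (linv x) x"
  by (auto simp: canc_def linv_def)

lemma linv_linv[simp]: "linv (linv x) = x" by (simp add: linv_def)
lemma fst_linv[simp]: "fst (linv x) = fst x" by (simp add: linv_def)

lemma winv_alt: "winv w = rev (map linv w)"
  by (simp add: winv_def linv_def case_prod_beta)

lemma winv_Cons: "winv (x # w) = winv w @ [linv x]"
  by (simp add: winv_alt)
lemma winv_Nil[simp]: "winv [] = []" by (simp add: winv_def)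
lemma winv_append: "winv (u @ v) = winv v @ winv u" by (simp add: winv_alt)
lemma winv_winv[simp]: "winv (winv w) = w" by (simp add: winv_alt rev_map comp_def)
lemma set_winv: "fst ` set (winv w) = fst ` set w"
  by (simp add: winv_alt image_image)

lemma red_winv_mid: "red (u @ w @ winv w @ v) = red (u @ v)"
proof (induction w arbitrary: u v)
  case Nil then show ?case by simp
next
  case (Cons x w)
  have "red (u @ (x # w) @ winv (x # w) @ v) = red ((u @ [x]) @ w @ winv w @ (linv x # v))"
    by (simp add: winv_Cons)
  also have "\<dots> = red (u @ x # linv x # v)" using Cons.IH[of "u @ [x]" "linv x # v"] by simp
  also have "\<dots> = red (u @ v)" by (simp add: red_append_cancel)
  finally show ?case .
qed

lemma red_winv_mid2: "red (u @ winv w @ w @ v) = red (u @ v)"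
  using red_winv_mid[of u "winv w" v] by simp

lemma carrier_free: "w \<in> carrier (free_group Y) \<longleftrightarrow> red w = w \<and> fst ` set w \<subseteq> Y"
  by (simp add: free_group_def)
lemma mult_free[simp]: "x \<otimes>\<^bsub>free_group Y\<^esub> y = red (x @ y)"
  by (simp add: free_group_def)
lemma one_free[simp]: "\<one>\<^bsub>free_group Y\<^esub> = []"
  by (simp add: free_group_def)

lemma red_in_free: "fst ` set w \<subseteq> Y \<Longrightarrow> red w \<in> carrier (free_group Y)"
  using set_red[of w] by (auto simp: carrier_free red_red)

lemma free_group_is_group: "group (free_group Y)"
proof (rule groupI)
  fix x y assume "x \<in> carrier (free_group Y)" "y \<in> carrier (free_group Y)"
  then show "x \<otimes>\<^bsub>free_group Y\<^esub> y \<in> carrier (free_group Y)"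
    unfolding mult_free by (intro red_in_free) (auto simp: carrier_free)
next
  show "\<one>\<^bsub>free_group Y\<^esub> \<in> carrier (free_group Y)" by (simp add: carrier_free)
next
  fix x y z assume "x \<in> carrier (free_group Y)" "y \<in> carrier (free_group Y)" "z \<in> carrier (free_group Y)"
  then show "x \<otimes>\<^bsub>free_group Y\<^esub> y \<otimes>\<^bsub>free_group Y\<^esub> z = x \<otimes>\<^bsub>free_group Y\<^esub> (y \<otimes>\<^bsub>free_group Y\<^esub> z)"
    by (simp add: red_append_left red_append_right)
next
  fix x assume "x \<in> carrier (free_group Y)"
  then show "\<one>\<^bsub>free_group Y\<^esub> \<otimes>\<^bsub>free_group Y\<^esub> x = x" by (simp add: carrier_free)
next
  fix x assume x: "x \<in> carrier (free_group Y)"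
  show "\<exists>y\<in>carrier (free_group Y). y \<otimes>\<^bsub>free_group Y\<^esub> x = \<one>\<^bsub>free_group Y\<^esub>"
  proof (intro bexI)
    show "red (winv x) \<in> carrier (free_group Y)" using x by (intro red_in_free) (auto simp: carrier_free set_winv)
    show "red (winv x) \<otimes>\<^bsub>free_group Y\<^esub> x = \<one>\<^bsub>free_group Y\<^esub>"
      using red_winv_mid2[of "[]" x "[]"] by (simp add: red_append_left)
  qed
qed

lemma inv_free: "w \<in> carrier (free_group Y) \<Longrightarrow> inv\<^bsub>free_group Y\<^esub> w = red (winv w)"
proof -
  assume w: "w \<in> carrier (free_group Y)"
  interpret F: group "free_group Y" by (rule free_group_is_group)
  show ?thesis
  proof (rule F.inv_equality)
    show "red (winv w) \<otimes>\<^bsub>free_group Y\<^esub> w = \<one>\<^bsub>free_group Y\<^esub>"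
      using red_winv_mid2[of "[]" w "[]"] by (simp add: red_append_left)
    show "red (winv w) \<in> carrier (free_group Y)" using w by (intro red_in_free) (auto simp: carrier_free set_winv)
  qed (use w in auto)
qed

lemma letter_in_free: "fst x \<in> Y \<Longrightarrow> [x] \<in> carrier (free_group Y)"
  by (simp add: carrier_free red_Cons)

lemma free_group_induct[consumes 1, case_names Nil Cons]:
  assumes "w \<in> carrier (free_group Y)" "P []"
    "\<And>x w. fst x \<in> Y \<Longrightarrow> w \<in> carrier (free_group Y) \<Longrightarrow> P w \<Longrightarrow> P (red (x # w))"
  shows "P w"
  using assms(1)
proof (induction w)
  case Nil then show ?case using assms(2) by simp
next
  case (Cons x w)
  then have rw: "red (x # w) = x # w" and s: "fst ` set (x # w) \<subseteq> Y" by (auto simp: carrier_free)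
  have w: "w \<in> carrier (free_group Y)" using red_tail[OF rw] s by (auto simp: carrier_free)
  have "P (red (x # w))" using assms(3)[OF _ w Cons.IH[OF w]] s by simp
  then show ?case using rw by simp
qed

subsection \<open>Universal property\<close>

definition lval :: "('b, 'c) monoid_scheme \<Rightarrow> ('a \<Rightarrow> 'b) \<Rightarrow> 'a \<times> bool \<Rightarrow> 'b" where
  "lval G f x = (if snd x then f (fst x) else inv\<^bsub>G\<^esub> (f (fst x)))"

definition fext :: "('b, 'c) monoid_scheme \<Rightarrow> ('a \<Rightarrow> 'b) \<Rightarrow> 'a fword \<Rightarrow> 'b" where
  "fext G f w = foldr (\<lambda>x acc. lval G f x \<otimes>\<^bsub>G\<^esub> acc) w \<one>\<^bsub>G\<^esub>"

context group begin

lemma lval_closed: "f ` Y \<subseteq> carrier G \<Longrightarrow> fst x \<in> Y \<Longrightarrow> lval G f x \<in> carrier G"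
  by (auto simp: lval_def)

lemma fext_Nil[simp]: "fext G f [] = \<one>" by (simp add: fext_def)
lemma fext_Cons: "fext G f (x # w) = lval G f x \<otimes> fext G f w" by (simp add: fext_def)

lemma fext_closed: "f ` Y \<subseteq> carrier G \<Longrightarrow> fst ` set w \<subseteq> Y \<Longrightarrow> fext G f w \<in> carrier G"
  by (induction w) (auto simp: fext_Cons lval_closed)

lemma fext_append: "f ` Y \<subseteq> carrier G \<Longrightarrow> fst ` set u \<subseteq> Y \<Longrightarrow> fst ` set v \<subseteq> Y \<Longrightarrow>
   fext G f (u @ v) = fext G f u \<otimes> fext G f v"
  by (induction u) (auto simp: fext_Cons lval_closed fext_closed m_assoc)

lemma lval_canc: "f ` Y \<subseteq> carrier G \<Longrightarrow> fst x \<in> Y \<Longrightarrow> canc x y \<Longrightarrow> lval G f x \<otimes> lval G f y = \<one>"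
  by (cases x; cases y) (auto simp: lval_def canc_def)

lemma fext_fcons: "f ` Y \<subseteq> carrier G \<Longrightarrow> fst x \<in> Y \<Longrightarrow> fst ` set r \<subseteq> Y \<Longrightarrow>
   fext G f (fcons x r) = lval G f x \<otimes> fext G f r"
proof (cases r)
  case (Cons y ys)
  assume a: "f ` Y \<subseteq> carrier G" "fst x \<in> Y" "fst ` set r \<subseteq> Y"
  show ?thesis
  proof (cases "canc x y")
    case True
    have "lval G f x \<otimes> fext G f r = (lval G f x \<otimes> lval G f y) \<otimes> fext G f ys"
      using a Cons by (simp add: fext_Cons m_assoc lval_closed fext_closed)
    then show ?thesis using True Cons a lval_canc[of f Y x y] by (simp add: fext_closed)
  next
    case False then show ?thesis using Cons by (simp add: fext_Cons)
  qed
qed (simp add: fext_Cons)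

lemma fext_red: "f ` Y \<subseteq> carrier G \<Longrightarrow> fst ` set w \<subseteq> Y \<Longrightarrow> fext G f (red w) = fext G f w"
proof (induction w)
  case (Cons x w)
  have s: "fst ` set (red w) \<subseteq> Y" using set_red[of w] Cons.prems by auto
  show ?case using Cons by (simp add: red_Cons fext_fcons[OF _ _ s] fext_Cons)
qed simp

lemma fext_hom: "f ` Y \<subseteq> carrier G \<Longrightarrow> fext G f \<in> hom (free_group Y) G"
proof (rule homI)
  fix x assume "f ` Y \<subseteq> carrier G" "x \<in> carrier (free_group Y)"
  then show "fext G f x \<in> carrier G" by (auto simp: carrier_free fext_closed)
next
  fix x y assume a: "f ` Y \<subseteq> carrier G" "x \<in> carrier (free_group Y)" "y \<in> carrier (free_group Y)"
  then have "fst ` set (x @ y) \<subseteq> Y" by (auto simp: carrier_free)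
  then show "fext G f (x \<otimes>\<^bsub>free_group Y\<^esub> y) = fext G f x \<otimes> fext G f y"
    using a by (simp add: fext_red fext_append carrier_free)
qed

lemma fext_letter: "f ` Y \<subseteq> carrier G \<Longrightarrow> y \<in> Y \<Longrightarrow> fext G f [(y, True)] = f y"
  by (auto simp: fext_Cons lval_def)

end

lemma inv_letter: "y \<in> Y \<Longrightarrow> inv\<^bsub>free_group Y\<^esub> [(y, True)] = [(y, False)]"
  by (simp add: inv_free carrier_free winv_def red_Cons)

lemma free_hom_unique:
  assumes G: "group G" and h1: "h1 \<in> hom (free_group Y) G" and h2: "h2 \<in> hom (free_group Y) G"
    and eq: "\<And>y. y \<in> Y \<Longrightarrow> h1 [(y, True)] = h2 [(y, True)]"
    and w: "w \<in> carrier (free_group Y)"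
  shows "h1 w = h2 w"
proof -
  interpret F: group "free_group Y" by (rule free_group_is_group)
  interpret H1: group_hom "free_group Y" G h1 using h1 G by (simp add: group_hom_def group_hom_axioms_def F.is_group)
  interpret H2: group_hom "free_group Y" G h2 using h2 G by (simp add: group_hom_def group_hom_axioms_def F.is_group)
  show ?thesis
  using w
proof (induction rule: free_group_induct)
  case Nil
  have "h1 \<one>\<^bsub>free_group Y\<^esub> = \<one>\<^bsub>G\<^esub>" "h2 \<one>\<^bsub>free_group Y\<^esub> = \<one>\<^bsub>G\<^esub>"
    by (rule H1.hom_one, rule H2.hom_one)
  then show ?case by simp
next
  case (Cons x w)
  have xl: "[x] \<in> carrier (free_group Y)" using Cons by (simp add: letter_in_free)
  have e: "red (x # w) = [x] \<otimes>\<^bsub>free_group Y\<^esub> w" by simp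
  have hx: "h1 [x] = h2 [x]"
  proof (cases "snd x")
    case True then show ?thesis using eq[of "fst x"] Cons by (cases x) auto
  next
    case False
    then have "[x] = inv\<^bsub>free_group Y\<^esub> [(fst x, True)]" using inv_letter[of "fst x" Y] Cons by (cases x) auto
    then show ?thesis using eq[of "fst x"] Cons letter_in_free[of "(fst x, True)" Y] by simp
  qed
  have w': "w \<in> carrier (free_group Y)" using Cons by simp
  show ?case using H1.hom_mult[OF xl w'] H2.hom_mult[OF xl w'] hx Cons by simp
qed
qed




definition gcomm :: "('a, 'b) monoid_scheme \<Rightarrow> 'a \<Rightarrow> 'a \<Rightarrow> 'a" where
  "gcomm G a b = a \<otimes>\<^bsub>G\<^esub> b \<otimes>\<^bsub>G\<^esub> inv\<^bsub>G\<^esub> a \<otimes>\<^bsub>G\<^esub> inv\<^bsub>G\<^esub> b"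

definition central :: "('a, 'b) monoid_scheme \<Rightarrow> 'a \<Rightarrow> bool" where
  "central G z \<longleftrightarrow> z \<in> carrier G \<and> (\<forall>a\<in>carrier G. z \<otimes>\<^bsub>G\<^esub> a = a \<otimes>\<^bsub>G\<^esub> z)"

context group begin

lemma inv_cancel_l[simp]: "x \<in> carrier G \<Longrightarrow> y \<in> carrier G \<Longrightarrow> inv x \<otimes> (x \<otimes> y) = y"
  by (simp add: m_assoc[symmetric])
lemma cancel_inv_l[simp]: "x \<in> carrier G \<Longrightarrow> y \<in> carrier G \<Longrightarrow> x \<otimes> (inv x \<otimes> y) = y"
  by (simp add: m_assoc[symmetric])

lemma gcomm_closed[simp]: "a \<in> carrier G \<Longrightarrow> b \<in> carrier G \<Longrightarrow> gcomm G a b \<in> carrier G"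
  by (simp add: gcomm_def)

lemma gcomm_eq:
  assumes "a \<in> carrier G" "b \<in> carrier G" "z \<in> carrier G"
  shows "gcomm G a b = z \<longleftrightarrow> a \<otimes> b = z \<otimes> (b \<otimes> a)"
proof -
  have "gcomm G a b = (a \<otimes> b) \<otimes> inv (b \<otimes> a)"
    using assms by (simp add: gcomm_def inv_mult_group m_assoc)
  moreover have "(a \<otimes> b) \<otimes> inv (b \<otimes> a) = z \<longleftrightarrow> a \<otimes> b = z \<otimes> (b \<otimes> a)"
    by (rule inv_solve_right') (use assms in simp_all)
  ultimately show ?thesis by simp
qed

lemma central_comm: "central G z \<Longrightarrow> a \<in> carrier G \<Longrightarrow> z \<otimes> a = a \<otimes> z"
  by (simp add: central_def)

lemma central_carrier: "central G z \<Longrightarrow> z \<in> carrier G"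
  by (simp add: central_def)

lemma central_inv: "central G z \<Longrightarrow> central G (inv z)"
  unfolding central_def
proof safe
  fix a assume z: "z \<in> carrier G" "\<forall>a\<in>carrier G. z \<otimes> a = a \<otimes> z" and a: "a \<in> carrier G"
  have c: "z \<otimes> a = a \<otimes> z" using z a by blast
  have "z \<otimes> (a \<otimes> inv z) = (z \<otimes> a) \<otimes> inv z" using z a by (simp add: m_assoc)
  also have "\<dots> = (a \<otimes> z) \<otimes> inv z" using c by simp
  also have "\<dots> = a" using z a by (simp add: m_assoc)
  finally have "z \<otimes> (a \<otimes> inv z) = a" .
  moreover have "inv z \<otimes> a = a \<otimes> inv z \<longleftrightarrow> a = z \<otimes> (a \<otimes> inv z)"
    by (rule inv_solve_left') (use z a in simp_all)
  ultimately show "inv z \<otimes> a = a \<otimes> inv z" by simp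
qed (simp)

lemma central_mult: "central G z \<Longrightarrow> central G w \<Longrightarrow> central G (z \<otimes> w)"
proof -
  assume zz: "central G z" and ww: "central G w"
  have z: "z \<in> carrier G" and w: "w \<in> carrier G" using zz ww by (simp_all add: central_def)
  have "z \<otimes> w \<otimes> a = a \<otimes> (z \<otimes> w)" if a: "a \<in> carrier G" for a
  proof -
    have c1: "z \<otimes> a = a \<otimes> z" using zz a by (simp add: central_def)
    have c2: "w \<otimes> a = a \<otimes> w" using ww a by (simp add: central_def)
    have "z \<otimes> w \<otimes> a = z \<otimes> (w \<otimes> a)" using z w a by (simp add: m_assoc)
    also have "\<dots> = z \<otimes> (a \<otimes> w)" using c2 by simp
    also have "\<dots> = (z \<otimes> a) \<otimes> w" using z w a by (simp add: m_assoc)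
    also have "\<dots> = (a \<otimes> z) \<otimes> w" using c1 by simp
    also have "\<dots> = a \<otimes> (z \<otimes> w)" using z w a by (simp add: m_assoc)
    finally show ?thesis .
  qed
  then show ?thesis using z w by (simp add: central_def)
qed

lemma central_one: "central G \<one>" by (simp add: central_def)

lemma central_pow: "central G z \<Longrightarrow> central G (z [^] (n::int))"
proof (induction n rule: int_induct[where k = 0])
  case base then show ?case by (simp add: central_one)
next
  case (step1 i)
  have zc: "z \<in> carrier G" using step1 by (simp add: central_def)
  have "z [^] (i + 1) = z [^] i \<otimes> z [^] (1::int)" by (rule int_pow_mult[OF zc])
  then show ?case using step1 central_mult[of "z [^] i" z] zc by simp
next
  case (step2 i)
  have zc: "z \<in> carrier G" using step2 by (simp add: central_def)
  have "z [^] (i - 1) = z [^] i \<otimes> z [^] (-1::int)" using int_pow_mult[OF zc, of i "-1"] by simp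
  moreover have "z [^] (-1::int) = inv z" using zc by (simp add: int_pow_neg)
  ultimately show ?case using step2 central_mult[of "z [^] i" "inv z"] central_inv[of z] by simp
qed

lemma comm_left:
  assumes z: "central G z" and a: "a \<in> carrier G" and x: "x \<in> carrier G"
  shows "a \<otimes> (z \<otimes> x) = z \<otimes> (a \<otimes> x)"
proof -
  have zc: "z \<in> carrier G" using z by (simp add: central_def)
  have e: "a \<otimes> z = z \<otimes> a" using z a by (simp add: central_def)
  have "a \<otimes> (z \<otimes> x) = (a \<otimes> z) \<otimes> x" using zc a x by (simp add: m_assoc)
  also have "\<dots> = (z \<otimes> a) \<otimes> x" using e by simp
  also have "\<dots> = z \<otimes> (a \<otimes> x)" using zc a x by (simp add: m_assoc)
  finally show ?thesis .
qed

lemma rel_mult_left: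
  assumes a: "a \<in> carrier G" and b: "b \<in> carrier G" and c: "c \<in> carrier G"
    and z1: "central G z1" and z2: "central G z2"
    and h1: "a \<otimes> c = z1 \<otimes> (c \<otimes> a)" and h2: "b \<otimes> c = z2 \<otimes> (c \<otimes> b)"
  shows "(a \<otimes> b) \<otimes> c = (z1 \<otimes> z2) \<otimes> (c \<otimes> (a \<otimes> b))"
proof -
  have [simp]: "z1 \<in> carrier G" "z2 \<in> carrier G" using z1 z2 by (auto simp: central_def)
  have "(a \<otimes> b) \<otimes> c = a \<otimes> (z2 \<otimes> (c \<otimes> b))" using a b c h2 by (simp add: m_assoc)
  also have "\<dots> = z2 \<otimes> (a \<otimes> (c \<otimes> b))" using comm_left[OF z2 a] b c by simp
  also have "\<dots> = z2 \<otimes> ((a \<otimes> c) \<otimes> b)" using a b c by (simp add: m_assoc)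
  also have "\<dots> = z2 \<otimes> (z1 \<otimes> ((c \<otimes> a) \<otimes> b))" using h1 a b c by (simp add: m_assoc)
  also have "\<dots> = z1 \<otimes> (z2 \<otimes> ((c \<otimes> a) \<otimes> b))" using comm_left[OF z1, of z2 "(c \<otimes> a) \<otimes> b"] a b c by simp
  also have "\<dots> = (z1 \<otimes> z2) \<otimes> (c \<otimes> (a \<otimes> b))" using a b c by (simp add: m_assoc)
  finally show ?thesis .
qed

lemma rel_inv_left:
  assumes a: "a \<in> carrier G" and c: "c \<in> carrier G" and z: "central G z"
    and h: "a \<otimes> c = z \<otimes> (c \<otimes> a)"
  shows "inv a \<otimes> c = inv z \<otimes> (c \<otimes> inv a)"
proof -
  have zc[simp]: "z \<in> carrier G" using z by (simp add: central_def)
  have zi: "central G (inv z)" using central_inv[OF z] .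
  have "a \<otimes> (inv z \<otimes> (c \<otimes> inv a)) = inv z \<otimes> (a \<otimes> (c \<otimes> inv a))"
    using comm_left[OF zi a, of "c \<otimes> inv a"] a c by simp
  also have "\<dots> = inv z \<otimes> ((a \<otimes> c) \<otimes> inv a)" using a c by (simp add: m_assoc)
  also have "\<dots> = inv z \<otimes> ((z \<otimes> (c \<otimes> a)) \<otimes> inv a)" using h by simp
  also have "\<dots> = (inv z \<otimes> z) \<otimes> (c \<otimes> (a \<otimes> inv a))" using a c by (simp add: m_assoc)
  also have "\<dots> = c" using a c zc by simp
  finally have "a \<otimes> (inv z \<otimes> (c \<otimes> inv a)) = c" .
  moreover have "inv a \<otimes> c = inv z \<otimes> (c \<otimes> inv a) \<longleftrightarrow> c = a \<otimes> (inv z \<otimes> (c \<otimes> inv a))"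
    by (rule inv_solve_left') (use a c zc in simp_all)
  ultimately show ?thesis by simp
qed

lemma rel_sym:
  assumes a: "a \<in> carrier G" and c: "c \<in> carrier G" and z: "central G z"
    and h: "a \<otimes> c = z \<otimes> (c \<otimes> a)"
  shows "c \<otimes> a = inv z \<otimes> (a \<otimes> c)"
proof -
  have zc: "z \<in> carrier G" using z by (simp add: central_def)
  have "c \<otimes> a = inv z \<otimes> (a \<otimes> c) \<longleftrightarrow> a \<otimes> c = z \<otimes> (c \<otimes> a)"
    by (rule inv_solve_left) (use a c zc in simp_all)
  then show ?thesis using h by simp
qed

end

subsection \<open>Normal closure and quotient maps\<close>

lemma (in group) nc_sub: "S \<subseteq> carrier G \<Longrightarrow>
   {g \<otimes> s \<otimes> inv g | g s. g \<in> carrier G \<and> s \<in> S} \<subseteq> carrier G"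
  by blast

lemma (in group) nc_normal:
  assumes S: "S \<subseteq> carrier G" shows "normal_closure G S \<lhd> G"
proof -
  let ?T = "{g \<otimes> s \<otimes> inv g | g s. g \<in> carrier G \<and> s \<in> S}"
  have T: "?T \<subseteq> carrier G" using nc_sub[OF S] .
  have sg: "subgroup (generate G ?T) G" by (rule generate_is_subgroup[OF T])
  have conj: "x \<otimes> h \<otimes> inv x \<in> generate G ?T" if x: "x \<in> carrier G" and h: "h \<in> generate G ?T" for x h
    using h
  proof (induction rule: generate.induct)
    case one then show ?case using x by (simp add: generate.one)
  next
    case (incl t)
    then obtain g s where t: "t = g \<otimes> s \<otimes> inv g" "g \<in> carrier G" "s \<in> S" by blast
    have sc: "s \<in> carrier G" using t(3) S by blast
    have "x \<otimes> t \<otimes> inv x = (x \<otimes> g) \<otimes> s \<otimes> inv (x \<otimes> g)"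
      unfolding t(1) using t(2) x sc by (simp add: m_assoc inv_mult_group)
    moreover have "(x \<otimes> g) \<otimes> s \<otimes> inv (x \<otimes> g) \<in> ?T" using t(2,3) x by blast
    ultimately show ?case by (simp add: generate.incl)
  next
    case (inv t)
    then obtain g s where t: "t = g \<otimes> s \<otimes> inv g" "g \<in> carrier G" "s \<in> S" by blast
    have sc: "s \<in> carrier G" using t(3) S by blast
    have "x \<otimes> inv t \<otimes> inv x = inv ((x \<otimes> g) \<otimes> s \<otimes> inv (x \<otimes> g))"
      unfolding t(1) using t(2) x sc by (simp add: m_assoc inv_mult_group)
    moreover have "(x \<otimes> g) \<otimes> s \<otimes> inv (x \<otimes> g) \<in> ?T" using t(2,3) x by blast
    ultimately show ?case by (simp add: generate.inv)
  next
    case (eng h1 h2)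
    have c1: "h1 \<in> carrier G" "h2 \<in> carrier G" using eng(1,2) generate_in_carrier[OF T] by auto
    have "x \<otimes> (h1 \<otimes> h2) \<otimes> inv x = (x \<otimes> h1 \<otimes> inv x) \<otimes> (x \<otimes> h2 \<otimes> inv x)"
      using c1 x by (simp add: m_assoc)
    then show ?case using eng by (simp add: generate.eng)
  qed
  show ?thesis unfolding normal_closure_def normal_inv_iff using sg conj by blast
qed

lemma (in group) nc_incl:
  assumes "S \<subseteq> carrier G" "s \<in> S" shows "s \<in> normal_closure G S"
proof -
  have "s = \<one> \<otimes> s \<otimes> inv \<one>" using assms by (simp add: subsetD)
  then have "s \<in> {g \<otimes> s \<otimes> inv g | g s. g \<in> carrier G \<and> s \<in> S}" using assms by blast
  then show ?thesis unfolding normal_closure_def by (rule generate.incl)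
qed

lemma nc_kills:
  assumes G: "group G" and H: "group H" and h: "h \<in> hom G H" and S: "S \<subseteq> carrier G"
    and k: "\<And>s. s \<in> S \<Longrightarrow> h s = \<one>\<^bsub>H\<^esub>" and n: "n \<in> normal_closure G S"
  shows "h n = \<one>\<^bsub>H\<^esub>"
proof -
  interpret G: group G by fact
  interpret gh: group_hom G H h using G H h by (simp add: group_hom_def group_hom_axioms_def)
  let ?T = "{g \<otimes>\<^bsub>G\<^esub> s \<otimes>\<^bsub>G\<^esub> inv\<^bsub>G\<^esub> g | g s. g \<in> carrier G \<and> s \<in> S}"
  have "?T \<subseteq> kernel G H h"
  proof
    fix t assume "t \<in> ?T"
    then obtain g s where t: "t = g \<otimes>\<^bsub>G\<^esub> s \<otimes>\<^bsub>G\<^esub> inv\<^bsub>G\<^esub> g" "g \<in> carrier G" "s \<in> S" by blast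
    have sc: "s \<in> carrier G" using t S by auto
    have "h t = h g \<otimes>\<^bsub>H\<^esub> h s \<otimes>\<^bsub>H\<^esub> inv\<^bsub>H\<^esub> (h g)" using t sc by simp
    also have "\<dots> = \<one>\<^bsub>H\<^esub>" using k[OF t(3)] t by simp
    finally show "t \<in> kernel G H h" using t sc by (simp add: kernel_def)
  qed
  then have "normal_closure G S \<subseteq> kernel G H h"
    unfolding normal_closure_def by (rule G.generate_subgroup_incl[OF _ gh.subgroup_kernel])
  then show ?thesis using n by (auto simp: kernel_def)
qed

lemma quot_hom:
  assumes N: "N \<lhd> G" and H: "group H" and h: "h \<in> hom G H"
    and k: "\<And>n. n \<in> N \<Longrightarrow> h n = \<one>\<^bsub>H\<^esub>"
  shows "(\<lambda>Z. the_elem (h ` Z)) \<in> hom (G Mod N) H"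
    and "\<And>a. a \<in> carrier G \<Longrightarrow> the_elem (h ` (N #>\<^bsub>G\<^esub> a)) = h a"
proof -
  interpret N: normal N G by fact
  interpret gh: group_hom G H h using N.is_group H h by (simp add: group_hom_def group_hom_axioms_def)
  have img: "h ` (N #>\<^bsub>G\<^esub> a) = {h a}" if a: "a \<in> carrier G" for a
  proof
    show "h ` (N #>\<^bsub>G\<^esub> a) \<subseteq> {h a}"
    proof
      fix y assume "y \<in> h ` (N #>\<^bsub>G\<^esub> a)"
      then obtain n where n: "n \<in> N" "y = h (n \<otimes>\<^bsub>G\<^esub> a)" by (auto simp: r_coset_def)
      have "n \<in> carrier G" using n N.subset by auto
      then show "y \<in> {h a}" using n k a by simp
    qed
    show "{h a} \<subseteq> h ` (N #>\<^bsub>G\<^esub> a)"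
      using a N.one_closed by (force simp: r_coset_def)
  qed
  show e: "\<And>a. a \<in> carrier G \<Longrightarrow> the_elem (h ` (N #>\<^bsub>G\<^esub> a)) = h a" using img by simp
  show "(\<lambda>Z. the_elem (h ` Z)) \<in> hom (G Mod N) H"
  proof (rule homI)
    fix Q1 assume "Q1 \<in> carrier (G Mod N)"
    then obtain a where "a \<in> carrier G" "Q1 = N #>\<^bsub>G\<^esub> a" by (auto simp: FactGroup_def RCOSETS_def)
    then show "the_elem (h ` Q1) \<in> carrier H" using e by simp
  next
    fix Q1 Q2 assume "Q1 \<in> carrier (G Mod N)" "Q2 \<in> carrier (G Mod N)"
    then obtain a b where ab: "a \<in> carrier G" "Q1 = N #>\<^bsub>G\<^esub> a" "b \<in> carrier G" "Q2 = N #>\<^bsub>G\<^esub> b"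
      by (auto simp: FactGroup_def RCOSETS_def)
    have "Q1 \<otimes>\<^bsub>G Mod N\<^esub> Q2 = N #>\<^bsub>G\<^esub> (a \<otimes>\<^bsub>G\<^esub> b)" using ab by (simp add: FactGroup_def N.rcos_sum)
    then show "the_elem (h ` (Q1 \<otimes>\<^bsub>G Mod N\<^esub> Q2)) = the_elem (h ` Q1) \<otimes>\<^bsub>H\<^esub> the_elem (h ` Q2)"
      using ab e by simp
  qed
qed

lemma quot_mult:
  assumes N: "N \<lhd> G" and "a \<in> carrier G" "b \<in> carrier G"
  shows "(N #>\<^bsub>G\<^esub> a) \<otimes>\<^bsub>G Mod N\<^esub> (N #>\<^bsub>G\<^esub> b) = N #>\<^bsub>G\<^esub> (a \<otimes>\<^bsub>G\<^esub> b)"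
  using assms by (simp add: FactGroup_def normal.rcos_sum)

lemma quot_carrier:
  assumes "Z \<in> carrier (G Mod N)" obtains a where "a \<in> carrier G" "Z = N #>\<^bsub>G\<^esub> a"
  using assms by (auto simp: FactGroup_def RCOSETS_def)

lemma quot_one_iff:
  assumes N: "N \<lhd> G" and a: "a \<in> carrier G"
  shows "N #>\<^bsub>G\<^esub> a = \<one>\<^bsub>G Mod N\<^esub> \<longleftrightarrow> a \<in> N"
proof -
  interpret N: normal N G by fact
  have o: "\<one>\<^bsub>G Mod N\<^esub> = N" by (simp add: FactGroup_def)
  show ?thesis unfolding o
  proof
    assume "N #>\<^bsub>G\<^esub> a = N" then show "a \<in> N" using N.coset_join1[OF _ a N.subgroup_axioms] by simp
  next
    assume "a \<in> N" then show "N #>\<^bsub>G\<^esub> a = N" using N.coset_join2[OF a N.subgroup_axioms] by simp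
  qed
qed



section \<open>Exponent sums and the intersection form\<close>

definition lsgn :: "gen \<times> bool \<Rightarrow> gen \<Rightarrow> int" where
  "lsgn l x = (if fst l = x then (if snd l then 1 else -1) else 0)"

lemma expsum_Nil[simp]: "expsum [] x = 0" by (simp add: expsum_def)
lemma expsum_Cons: "expsum (l # w) x = lsgn l x + expsum w x"
  by (simp add: expsum_def lsgn_def)
lemma expsum_append: "expsum (u @ v) x = expsum u x + expsum v x"
  by (simp add: expsum_def)

lemma lsgn_canc: "canc l l' \<Longrightarrow> lsgn l x + lsgn l' x = 0"
  by (cases l; cases l') (auto simp: canc_def lsgn_def)

lemma expsum_fcons: "expsum (fcons l r) x = lsgn l x + expsum r x"
proof (cases r)
  case Nil then show ?thesis by (simp add: expsum_Cons)
next
  case (Cons y ys)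
  then show ?thesis using lsgn_canc[of l y x] by (auto simp: expsum_Cons)
qed

lemma expsum_red: "expsum (red w) x = expsum w x"
  by (induction w) (simp_all add: red_Cons expsum_fcons expsum_Cons)

lemma expsum_winv: "expsum (winv w) x = - expsum w x"
  by (induction w) (simp_all add: winv_Cons expsum_append expsum_Cons lsgn_def linv_def)

lemma expsum_letter: "expsum [(y, True)] x = (if y = x then 1 else 0)"
  by (simp add: expsum_Cons lsgn_def)
lemma expsum_letter_neg: "expsum [(y, False)] x = (if y = x then -1 else 0)"
  by (simp add: expsum_Cons lsgn_def)

lemma omega_red_left: "omega g (red u) v = omega g u v"
  by (simp add: omega_def expsum_red)
lemma omega_red_right: "omega g u (red v) = omega g u v"
  by (simp add: omega_def expsum_red)
lemma omega_append_left: "omega g (u @ w) v = omega g u v + omega g w v"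
  unfolding omega_def expsum_append sum.distrib[symmetric] by (rule sum.cong) (simp_all add: algebra_simps)
lemma omega_Cons_left: "omega g (x # w) v = omega g [x] v + omega g w v"
  using omega_append_left[of g "[x]" w v] by simp
lemma omega_antisym: "omega g u v = - omega g v u"
  by (simp add: omega_def sum_negf[symmetric] algebra_simps)
lemma omega_Nil[simp]: "omega g [] v = 0" by (simp add: omega_def)
lemma omega_neg_letter: "omega g [(y, False)] v = - omega g [(y, True)] v"
  unfolding omega_def sum_negf[symmetric] by (rule sum.cong) (auto simp: expsum_Cons lsgn_def)
lemma omega_red_Cons: "omega g (red (x # w)) v = omega g [x] v + omega g w v"
  by (simp add: omega_red_left omega_Cons_left[of g x w v])

definition Jf :: "nat \<Rightarrow> gen \<Rightarrow> gen \<Rightarrow> int" where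
  "Jf g x y = (\<Sum>i\<in>{1..g}. (if x = A i \<and> y = B i then 1 else 0) - (if x = B i \<and> y = A i then 1 else 0))"

lemma omega_letters: "omega g [(x, True)] [(y, True)] = Jf g x y"
  unfolding omega_def Jf_def by (rule sum.cong) (auto simp: expsum_letter)

lemma Jf_AA: "Jf g (A i) (A j) = 0" by (simp add: Jf_def)
lemma Jf_BB: "Jf g (B i) (B j) = 0" by (simp add: Jf_def)
lemma Jf_AB: "i \<in> {1..g} \<Longrightarrow> Jf g (A i) (B j) = (if i = j then 1 else 0)"
proof -
  assume i: "i \<in> {1..g}"
  have "Jf g (A i) (B j) = (\<Sum>k\<in>{1..g}. if k = i \<and> i = j then 1 else 0)"
    unfolding Jf_def by (rule sum.cong) auto
  also have "\<dots> = (if i = j then 1 else 0)" using i by (cases "i = j") simp_all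
  finally show ?thesis .
qed
lemma Jf_BA: "i \<in> {1..g} \<Longrightarrow> Jf g (B j) (A i) = - (if i = j then 1 else 0)"
proof -
  assume i: "i \<in> {1..g}"
  have "Jf g (B j) (A i) = (\<Sum>k\<in>{1..g}. - (if k = i \<and> i = j then 1 else 0))"
    unfolding Jf_def by (rule sum.cong) auto
  also have "\<dots> = - (if i = j then 1 else 0)" using i by (cases "i = j") (simp_all add: sum_negf)
  finally show ?thesis .
qed
lemma Jf_Sig: "Jf g Sig y = 0" "Jf g y Sig = 0" by (simp_all add: Jf_def)



lemma bilin_ext:
  fixes \<phi> :: "'a fword \<Rightarrow> int"
  assumes G: "group G" and f: "f \<in> hom (free_group Y) G" and b: "b \<in> carrier G"
    and s: "central G s"
    and phi0: "\<phi> [] = 0"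
    and phiC: "\<And>x w. fst x \<in> Y \<Longrightarrow> w \<in> carrier (free_group Y) \<Longrightarrow> \<phi> (red (x # w)) = \<phi> [x] + \<phi> w"
    and phiN: "\<And>y. y \<in> Y \<Longrightarrow> \<phi> [(y, False)] = - \<phi> [(y, True)]"
    and gen: "\<And>y. y \<in> Y \<Longrightarrow> f [(y, True)] \<otimes>\<^bsub>G\<^esub> b = s [^]\<^bsub>G\<^esub> \<phi> [(y, True)] \<otimes>\<^bsub>G\<^esub> (b \<otimes>\<^bsub>G\<^esub> f [(y, True)])"
    and w: "w \<in> carrier (free_group Y)"
  shows "f w \<otimes>\<^bsub>G\<^esub> b = s [^]\<^bsub>G\<^esub> \<phi> w \<otimes>\<^bsub>G\<^esub> (b \<otimes>\<^bsub>G\<^esub> f w)"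
proof -
  interpret G: group G by fact
  interpret F: group "free_group Y" by (rule free_group_is_group)
  interpret h: group_hom "free_group Y" G f using f G by (simp add: group_hom_def group_hom_axioms_def F.is_group)
  have sc: "s \<in> carrier G" using s by (simp add: central_def)
  show ?thesis using w
  proof (induction rule: free_group_induct)
    case Nil
    have "f [] = \<one>\<^bsub>G\<^esub>" using h.hom_one by simp
    then show ?case using b phi0 by simp
  next
    case (Cons x w)
    have xl: "[x] \<in> carrier (free_group Y)" using Cons by (simp add: letter_in_free)
    have fx: "f [x] \<in> carrier G" using xl by simp
    have fw: "f w \<in> carrier G" using Cons by simp
    have relx: "f [x] \<otimes>\<^bsub>G\<^esub> b = s [^]\<^bsub>G\<^esub> \<phi> [x] \<otimes>\<^bsub>G\<^esub> (b \<otimes>\<^bsub>G\<^esub> f [x])"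
    proof (cases "snd x")
      case True then show ?thesis using gen[of "fst x"] Cons by (cases x) auto
    next
      case False
      obtain y where xy: "x = (y, False)" "y \<in> Y" using False Cons by (cases x) auto
      have yl: "[(y, True)] \<in> carrier (free_group Y)" using xy by (simp add: letter_in_free)
      have "[x] = inv\<^bsub>free_group Y\<^esub> [(y, True)]" using inv_letter[of y Y] xy by simp
      then have e: "f [x] = inv\<^bsub>G\<^esub> (f [(y, True)])" using yl by simp
      have "inv\<^bsub>G\<^esub> (f [(y, True)]) \<otimes>\<^bsub>G\<^esub> b = inv\<^bsub>G\<^esub> (s [^]\<^bsub>G\<^esub> \<phi> [(y, True)]) \<otimes>\<^bsub>G\<^esub> (b \<otimes>\<^bsub>G\<^esub> inv\<^bsub>G\<^esub> (f [(y, True)]))"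
        by (rule G.rel_inv_left) (use yl b G.central_pow[OF s] gen[OF xy(2)] in simp_all)
      moreover have "inv\<^bsub>G\<^esub> (s [^]\<^bsub>G\<^esub> \<phi> [(y, True)]) = s [^]\<^bsub>G\<^esub> \<phi> [x]"
        using phiN[OF xy(2)] xy sc by (simp add: G.int_pow_neg)
      ultimately show ?thesis using e by simp
    qed
    have wc: "w \<in> carrier (free_group Y)" using Cons by simp
    have e2: "f (red (x # w)) = f [x] \<otimes>\<^bsub>G\<^esub> f w" using h.hom_mult[OF xl wc] by simp
    have "(f [x] \<otimes>\<^bsub>G\<^esub> f w) \<otimes>\<^bsub>G\<^esub> b = (s [^]\<^bsub>G\<^esub> \<phi> [x] \<otimes>\<^bsub>G\<^esub> s [^]\<^bsub>G\<^esub> \<phi> w) \<otimes>\<^bsub>G\<^esub> (b \<otimes>\<^bsub>G\<^esub> (f [x] \<otimes>\<^bsub>G\<^esub> f w))"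
      by (rule G.rel_mult_left) (use fx fw b G.central_pow[OF s] relx Cons.IH in simp_all)
    moreover have "s [^]\<^bsub>G\<^esub> \<phi> [x] \<otimes>\<^bsub>G\<^esub> s [^]\<^bsub>G\<^esub> \<phi> w = s [^]\<^bsub>G\<^esub> \<phi> (red (x # w))"
      using phiC[OF Cons(1,2)] sc by (simp add: G.int_pow_mult)
    ultimately show ?case using e2 by simp
  qed
qed

lemma central_ext:
  assumes G: "group G" and f: "f \<in> hom (free_group Y) G" and b: "b \<in> carrier G"
    and gen: "\<And>y. y \<in> Y \<Longrightarrow> f [(y, True)] \<otimes>\<^bsub>G\<^esub> b = b \<otimes>\<^bsub>G\<^esub> f [(y, True)]"
    and w: "w \<in> carrier (free_group Y)"
  shows "f w \<otimes>\<^bsub>G\<^esub> b = b \<otimes>\<^bsub>G\<^esub> f w"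
proof -
  interpret G: group G by fact
  have "f w \<otimes>\<^bsub>G\<^esub> b = \<one>\<^bsub>G\<^esub> [^]\<^bsub>G\<^esub> ((\<lambda>_. 0::int) w) \<otimes>\<^bsub>G\<^esub> (b \<otimes>\<^bsub>G\<^esub> f w)"
    by (rule bilin_ext[OF G f b G.central_one]) (use gen b f w in \<open>auto simp: hom_def Pi_def letter_in_free\<close>)
  then show ?thesis using b f w by (simp add: hom_def Pi_def)
qed



lemma winv_lett: "winv [(x, b)] = [(x, \<not> b)]" by (simp add: winv_def)

lemma wcomm_lett: "wcomm (lett x) (lett y) = red [(x, True), (y, True), (x, False), (y, False)]"
  by (simp add: wcomm_def lett_def winv_lett)

lemma set_wcomm_lett: "fst ` set (wcomm (lett x) (lett y)) \<subseteq> {x, y}"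
  using set_red[of "[(x, True), (y, True), (x, False), (y, False)]"] unfolding wcomm_lett by auto

lemma fext_wcomm:
  assumes G: "group G" and f: "f ` Y \<subseteq> carrier G" and x: "x \<in> Y" and y: "y \<in> Y"
  shows "fext G f (wcomm (lett x) (lett y)) = gcomm G (f x) (f y)"
proof -
  interpret G: group G by fact
  have fx: "f x \<in> carrier G" "f y \<in> carrier G" using f x y by auto
  have "fext G f (wcomm (lett x) (lett y)) = fext G f [(x, True), (y, True), (x, False), (y, False)]"
    unfolding wcomm_lett by (rule G.fext_red[OF f]) (use x y in auto)
  also have "\<dots> = gcomm G (f x) (f y)" using fx by (simp add: G.fext_Cons lval_def gcomm_def G.m_assoc)
  finally show ?thesis .
qed

lemma fext_wcomm_sig:
  assumes G: "group G" and f: "f ` Y \<subseteq> carrier G" and x: "x \<in> Y" and y: "y \<in> Y" and s: "Sig \<in> Y"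
  shows "fext G f (wcomm (lett x) (lett y) @ [(Sig, False), (Sig, False)]) =
     gcomm G (f x) (f y) \<otimes>\<^bsub>G\<^esub> (inv\<^bsub>G\<^esub> f Sig \<otimes>\<^bsub>G\<^esub> inv\<^bsub>G\<^esub> f Sig)"
proof -
  interpret G: group G by fact
  have "fext G f (wcomm (lett x) (lett y) @ [(Sig, False), (Sig, False)]) =
      fext G f (wcomm (lett x) (lett y)) \<otimes>\<^bsub>G\<^esub> fext G f [(Sig, False), (Sig, False)]"
    by (rule G.fext_append[OF f]) (use set_wcomm_lett[of x y] x y s in auto)
  also have "\<dots> = gcomm G (f x) (f y) \<otimes>\<^bsub>G\<^esub> (inv\<^bsub>G\<^esub> f Sig \<otimes>\<^bsub>G\<^esub> inv\<^bsub>G\<^esub> f Sig)"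
    using fext_wcomm[OF G f x y] f s by (simp add: G.fext_Cons lval_def image_subset_iff)
  finally show ?thesis .
qed

lemma surf_sub: "surf_gens g \<subseteq> Hg_gens g" by (auto simp: Hg_gens_def)
lemma Sig_Hg: "Sig \<in> Hg_gens g" by (simp add: Hg_gens_def)
lemma Sig_notin_surf: "Sig \<notin> surf_gens g" by (auto simp: surf_gens_def)
lemma A_surf: "i \<in> {1..g} \<Longrightarrow> A i \<in> surf_gens g" by (auto simp: surf_gens_def)
lemma B_surf: "i \<in> {1..g} \<Longrightarrow> B i \<in> surf_gens g" by (auto simp: surf_gens_def)
lemma surf_cases: "x \<in> surf_gens g \<Longrightarrow> (\<And>i. i \<in> {1..g} \<Longrightarrow> x = A i \<Longrightarrow> P) \<Longrightarrow> (\<And>i. i \<in> {1..g} \<Longrightarrow> x = B i \<Longrightarrow> P) \<Longrightarrow> P"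
  by (auto simp: surf_gens_def)

lemma A_Hg: "i \<in> {1..g} \<Longrightarrow> A i \<in> Hg_gens g" using A_surf surf_sub by blast
lemma B_Hg: "i \<in> {1..g} \<Longrightarrow> B i \<in> Hg_gens g" using B_surf surf_sub by blast

lemma rels_letters: "r \<in> Hg_rels g \<Longrightarrow> fst ` set r \<subseteq> Hg_gens g"
proof -
  have sw: "fst ` set (wcomm (lett x) (lett y)) \<subseteq> Hg_gens g" if "x \<in> Hg_gens g" "y \<in> Hg_gens g" for x y
    using set_wcomm_lett[of x y] that by auto
  assume "r \<in> Hg_rels g"
  then show ?thesis unfolding Hg_rels_def
  proof (elim UnE CollectE exE conjE)
    fix i j assume "r = wcomm (lett (A i)) (lett (A j))" "i \<in> {1..g}" "j \<in> {1..g}"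
    then show ?thesis using sw A_Hg by simp
  next
    fix i j assume "r = wcomm (lett (B i)) (lett (B j))" "i \<in> {1..g}" "j \<in> {1..g}"
    then show ?thesis using sw B_Hg by simp
  next
    fix i assume "r = wcomm (lett Sig) (lett (A i))" "i \<in> {1..g}"
    then show ?thesis using sw A_Hg Sig_Hg by simp
  next
    fix i assume "r = wcomm (lett Sig) (lett (B i))" "i \<in> {1..g}"
    then show ?thesis using sw B_Hg Sig_Hg by simp
  next
    fix i j assume "r = wcomm (lett (A i)) (lett (B j)) @ (if i = j then [(Sig, False), (Sig, False)] else [])"
      "i \<in> {1..g}" "j \<in> {1..g}"
    then show ?thesis using sw[OF A_Hg B_Hg] Sig_Hg by auto
  qed
qed

lemma rels_killed:
  assumes G: "group G" and f: "f ` Hg_gens g \<subseteq> carrier G"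
    and hS: "\<And>x. x \<in> surf_gens g \<Longrightarrow> gcomm G (f Sig) (f x) = \<one>\<^bsub>G\<^esub>"
    and hAB: "\<And>x y. x \<in> surf_gens g \<Longrightarrow> y \<in> surf_gens g \<Longrightarrow>
                 gcomm G (f x) (f y) = f Sig [^]\<^bsub>G\<^esub> (2 * Jf g x y)"
    and r: "r \<in> Hg_rels g"
  shows "fext G f (red r) = \<one>\<^bsub>G\<^esub>"
proof -
  interpret G: group G by fact
  have fr: "fext G f (red r) = fext G f r" by (rule G.fext_red[OF f rels_letters[OF r]])
  have sc: "f Sig \<in> carrier G" using f Sig_Hg by auto
  have Hs: "x \<in> surf_gens g \<Longrightarrow> x \<in> Hg_gens g" for x using surf_sub by auto
  have "fext G f r = \<one>\<^bsub>G\<^esub>" using r unfolding Hg_rels_def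
  proof (elim UnE CollectE exE conjE)
    fix i j assume r: "r = wcomm (lett (A i)) (lett (A j))" and ij: "i \<in> {1..g}" "j \<in> {1..g}"
    then show ?thesis using fext_wcomm[OF G f Hs Hs, OF A_surf A_surf] hAB[OF A_surf A_surf] Jf_AA by simp
  next
    fix i j assume r: "r = wcomm (lett (B i)) (lett (B j))" and ij: "i \<in> {1..g}" "j \<in> {1..g}"
    then show ?thesis using fext_wcomm[OF G f Hs Hs, OF B_surf B_surf] hAB[OF B_surf B_surf] Jf_BB by simp
  next
    fix i assume r: "r = wcomm (lett Sig) (lett (A i))" and i: "i \<in> {1..g}"
    then show ?thesis using fext_wcomm[OF G f Sig_Hg Hs, OF A_surf] hS[OF A_surf] by simp
  next
    fix i assume r: "r = wcomm (lett Sig) (lett (B i))" and i: "i \<in> {1..g}"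
    then show ?thesis using fext_wcomm[OF G f Sig_Hg Hs, OF B_surf] hS[OF B_surf] by simp
  next
    fix i j assume r: "r = wcomm (lett (A i)) (lett (B j)) @ (if i = j then [(Sig, False), (Sig, False)] else [])"
      and ij: "i \<in> {1..g}" "j \<in> {1..g}"
    have c: "gcomm G (f (A i)) (f (B j)) = f Sig [^]\<^bsub>G\<^esub> (2 * Jf g (A i) (B j))"
      using hAB[OF A_surf B_surf] ij by simp
    show ?thesis
    proof (cases "i = j")
      case True
      have "f Sig [^]\<^bsub>G\<^esub> (2::int) = f Sig \<otimes>\<^bsub>G\<^esub> f Sig"
        using G.int_pow_mult[OF sc, of 1 1] sc by simp
      then have "gcomm G (f (A i)) (f (B j)) = f Sig \<otimes>\<^bsub>G\<^esub> f Sig"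
        using c Jf_AB[OF ij(1)] True by simp
      then show ?thesis using r True fext_wcomm_sig[OF G f Hs Hs Sig_Hg, OF A_surf B_surf] ij sc
        by (simp add: G.m_assoc)
    next
      case False
      then show ?thesis using r c Jf_AB[OF ij(1)] fext_wcomm[OF G f Hs Hs, OF A_surf B_surf] ij by simp
    qed
  qed
  then show ?thesis using fr by simp
qed

section \<open>The group H_g\<close>

definition FH :: "nat \<Rightarrow> gen fword monoid" where "FH g = free_group (Hg_gens g)"
definition NH :: "nat \<Rightarrow> gen fword set" where "NH g = normal_closure (FH g) (red ` Hg_rels g)"
definition iota :: "nat \<Rightarrow> gen fword \<Rightarrow> gen fword set" where "iota g w = NH g #>\<^bsub>FH g\<^esub> w"
definition aH :: "nat \<Rightarrow> gen \<Rightarrow> gen fword set" where "aH g x = iota g [(x, True)]"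

lemma group_FH: "group (FH g)" by (simp add: FH_def free_group_is_group)

lemma rels_carrier: "red ` Hg_rels g \<subseteq> carrier (FH g)"
  using rels_letters by (auto simp: FH_def intro!: red_in_free)

lemma NH_normal: "NH g \<lhd> FH g"
  unfolding NH_def by (rule group.nc_normal[OF group_FH rels_carrier])

lemma Hgrp_eq: "Hgrp g = FH g Mod NH g"
  by (simp add: Hgrp_def presented_group_def FH_def NH_def)

lemma group_H: "group (Hgrp g)"
  unfolding Hgrp_eq by (rule normal.factorgroup_is_group[OF NH_normal])

lemma iota_hom: "iota g \<in> hom (FH g) (Hgrp g)"
  unfolding Hgrp_eq iota_def[abs_def] by (rule normal.r_coset_hom_Mod[OF NH_normal])

lemma carrier_FH: "w \<in> carrier (FH g) \<longleftrightarrow> red w = w \<and> fst ` set w \<subseteq> Hg_gens g"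
  by (simp add: FH_def carrier_free)

lemma Hclass_iota: "w \<in> carrier (FH g) \<Longrightarrow> Hclass g w = iota g w"
  by (simp add: Hclass_def pres_class_def iota_def NH_def FH_def carrier_free)

lemma aH_carrier: "x \<in> Hg_gens g \<Longrightarrow> aH g x \<in> carrier (Hgrp g)"
  using iota_hom letter_in_free[of "(x, True)" "Hg_gens g"] unfolding aH_def FH_def
  by (auto simp: hom_def Pi_def FH_def)

lemma iota_fext: "w \<in> carrier (FH g) \<Longrightarrow> iota g w = fext (Hgrp g) (aH g) w"
proof -
  assume w: "w \<in> carrier (FH g)"
  have f: "aH g ` Hg_gens g \<subseteq> carrier (Hgrp g)" using aH_carrier by auto
  show ?thesis
  proof (rule free_hom_unique[OF group_H])
    show "iota g \<in> hom (free_group (Hg_gens g)) (Hgrp g)" using iota_hom by (simp add: FH_def)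
    show "fext (Hgrp g) (aH g) \<in> hom (free_group (Hg_gens g)) (Hgrp g)"
      by (rule group.fext_hom[OF group_H f])
    show "w \<in> carrier (free_group (Hg_gens g))" using w by (simp add: FH_def)
    fix y assume "y \<in> Hg_gens g"
    then show "iota g [(y, True)] = fext (Hgrp g) (aH g) [(y, True)]"
      using group.fext_letter[OF group_H f] by (simp add: aH_def)
  qed
qed

lemma iota_rel: "r \<in> Hg_rels g \<Longrightarrow> fext (Hgrp g) (aH g) (red r) = \<one>\<^bsub>Hgrp g\<^esub>"
proof -
  assume r: "r \<in> Hg_rels g"
  have rc: "red r \<in> carrier (FH g)" using rels_carrier r by auto
  have "red r \<in> NH g" unfolding NH_def
    by (rule group.nc_incl[OF group_FH rels_carrier]) (use r in auto)
  then have "iota g (red r) = \<one>\<^bsub>Hgrp g\<^esub>"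
    using quot_one_iff[OF NH_normal rc] by (simp add: iota_def Hgrp_eq)
  then show ?thesis using iota_fext[OF rc] by simp
qed



lemma (in group) gcomm_swap:
  "a \<in> carrier G \<Longrightarrow> b \<in> carrier G \<Longrightarrow> gcomm G b a = inv (gcomm G a b)"
  by (simp add: gcomm_def inv_mult_group m_assoc)

lemma rel_AA: "i \<in> {1..g} \<Longrightarrow> j \<in> {1..g} \<Longrightarrow> wcomm (lett (A i)) (lett (A j)) \<in> Hg_rels g"
  unfolding Hg_rels_def by (intro UnI1) blast
lemma rel_BB: "i \<in> {1..g} \<Longrightarrow> j \<in> {1..g} \<Longrightarrow> wcomm (lett (B i)) (lett (B j)) \<in> Hg_rels g"
  unfolding Hg_rels_def by (intro UnI1 UnI2[where A="{wcomm (lett (A i)) (lett (A j)) | i j. i \<in> {1..g} \<and> j \<in> {1..g}}"]) blast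
lemma rel_SA: "i \<in> {1..g} \<Longrightarrow> wcomm (lett Sig) (lett (A i)) \<in> Hg_rels g"
  unfolding Hg_rels_def by (rule UnI1, rule UnI1, rule UnI2) blast
lemma rel_SB: "i \<in> {1..g} \<Longrightarrow> wcomm (lett Sig) (lett (B i)) \<in> Hg_rels g"
  unfolding Hg_rels_def by (rule UnI1, rule UnI2) blast
lemma rel_AB: "i \<in> {1..g} \<Longrightarrow> j \<in> {1..g} \<Longrightarrow>
   wcomm (lett (A i)) (lett (B j)) @ (if i = j then [(Sig, False), (Sig, False)] else []) \<in> Hg_rels g"
  unfolding Hg_rels_def by (rule UnI2) blast

definition sigH :: "nat \<Rightarrow> gen fword set" where "sigH g = aH g Sig"

lemma sigH_carrier: "sigH g \<in> carrier (Hgrp g)" by (simp add: sigH_def aH_carrier Sig_Hg)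

lemma aH_surf_carrier: "x \<in> surf_gens g \<Longrightarrow> aH g x \<in> carrier (Hgrp g)"
  using aH_carrier surf_sub by blast

lemma fH: "aH g ` Hg_gens g \<subseteq> carrier (Hgrp g)" using aH_carrier by blast

lemma relH_fext: "r \<in> Hg_rels g \<Longrightarrow> fext (Hgrp g) (aH g) r = \<one>\<^bsub>Hgrp g\<^esub>"
  using iota_rel[of r g] group.fext_red[OF group_H fH rels_letters] by simp

lemma H_sig_comm: "x \<in> surf_gens g \<Longrightarrow> gcomm (Hgrp g) (sigH g) (aH g x) = \<one>\<^bsub>Hgrp g\<^esub>"
proof (erule surf_cases)
  fix i assume i: "i \<in> {1..g}" "x = A i"
  show ?thesis using relH_fext[OF rel_SA[OF i(1)]] fext_wcomm[OF group_H fH Sig_Hg A_Hg[OF i(1)]] i(2) by (simp add: sigH_def)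
next
  fix i assume i: "i \<in> {1..g}" "x = B i"
  show ?thesis using relH_fext[OF rel_SB[OF i(1)]] fext_wcomm[OF group_H fH Sig_Hg B_Hg[OF i(1)]] i(2) by (simp add: sigH_def)
qed

lemma H_AB_comm:
  assumes i: "i \<in> {1..g}" and j: "j \<in> {1..g}"
  shows "gcomm (Hgrp g) (aH g (A i)) (aH g (B j)) = sigH g [^]\<^bsub>Hgrp g\<^esub> (2 * Jf g (A i) (B j))"
proof -
  interpret H: group "Hgrp g" by (rule group_H)
  let ?r = "wcomm (lett (A i)) (lett (B j)) @ (if i = j then [(Sig, False), (Sig, False)] else [])"
  have r: "?r \<in> Hg_rels g" using rel_AB[OF i j] .
  have ac: "aH g (A i) \<in> carrier (Hgrp g)" "aH g (B j) \<in> carrier (Hgrp g)" using aH_carrier A_Hg B_Hg i j by auto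
  have sc: "sigH g \<in> carrier (Hgrp g)" by (rule sigH_carrier)
  show ?thesis
  proof (cases "i = j")
    case True
    let ?X = "gcomm (Hgrp g) (aH g (A i)) (aH g (B j))"
    let ?Y = "inv\<^bsub>Hgrp g\<^esub> sigH g \<otimes>\<^bsub>Hgrp g\<^esub> inv\<^bsub>Hgrp g\<^esub> sigH g"
    have "?X \<otimes>\<^bsub>Hgrp g\<^esub> ?Y = \<one>\<^bsub>Hgrp g\<^esub>"
      using relH_fext[OF r] fext_wcomm_sig[OF group_H fH A_Hg[OF i] B_Hg[OF j] Sig_Hg] True
      by (simp add: sigH_def)
    moreover have Xc: "?X \<in> carrier (Hgrp g)" using ac by simp
    moreover have Yc: "?Y \<in> carrier (Hgrp g)" using sc by simp
    ultimately have "inv\<^bsub>Hgrp g\<^esub> ?Y = ?X"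
      by (intro H.inv_equality) 
    then have "?X = inv\<^bsub>Hgrp g\<^esub> ?Y" by simp
    also have "\<dots> = sigH g \<otimes>\<^bsub>Hgrp g\<^esub> sigH g" using sc by (simp add: H.inv_mult_group)
    also have "\<dots> = sigH g [^]\<^bsub>Hgrp g\<^esub> (2::int)" using H.int_pow_mult[OF sc, of 1 1] sc by simp
    finally show ?thesis using Jf_AB[OF i] True by simp
  next
    case False
    then show ?thesis using relH_fext[OF r] fext_wcomm[OF group_H fH A_Hg[OF i] B_Hg[OF j]] Jf_AB[OF i] by simp
  qed
qed

lemma H_gen_comm:
  assumes x: "x \<in> surf_gens g" and y: "y \<in> surf_gens g"
  shows "gcomm (Hgrp g) (aH g x) (aH g y) = sigH g [^]\<^bsub>Hgrp g\<^esub> (2 * Jf g x y)"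
proof -
  interpret H: group "Hgrp g" by (rule group_H)
  have sc: "sigH g \<in> carrier (Hgrp g)" by (rule sigH_carrier)
  show ?thesis
  proof (rule surf_cases[OF x]; rule surf_cases[OF y])
    fix i j assume ij: "i \<in> {1..g}" "x = A i" "j \<in> {1..g}" "y = A j"
    show ?thesis using relH_fext[OF rel_AA[OF ij(1,3)]] fext_wcomm[OF group_H fH A_Hg[OF ij(1)] A_Hg[OF ij(3)]] Jf_AA ij by simp
  next
    fix i j assume ij: "i \<in> {1..g}" "x = A i" "j \<in> {1..g}" "y = B j"
    then show ?thesis using H_AB_comm[OF ij(1,3)] by simp
  next
    fix i j assume ij: "i \<in> {1..g}" "x = B i" "j \<in> {1..g}" "y = A j"
    have ac: "aH g (A j) \<in> carrier (Hgrp g)" "aH g (B i) \<in> carrier (Hgrp g)" using aH_carrier A_Hg B_Hg ij by auto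
    have "gcomm (Hgrp g) (aH g (B i)) (aH g (A j)) = inv\<^bsub>Hgrp g\<^esub> (gcomm (Hgrp g) (aH g (A j)) (aH g (B i)))"
      by (rule H.gcomm_swap[OF ac])
    also have "\<dots> = inv\<^bsub>Hgrp g\<^esub> (sigH g [^]\<^bsub>Hgrp g\<^esub> (2 * Jf g (A j) (B i)))" using H_AB_comm[OF ij(3,1)] by simp
    also have "\<dots> = sigH g [^]\<^bsub>Hgrp g\<^esub> (- (2 * Jf g (A j) (B i)))" using sc by (simp add: H.int_pow_neg)
    also have "\<dots> = sigH g [^]\<^bsub>Hgrp g\<^esub> (2 * Jf g (B i) (A j))"
      by (simp add: Jf_AB[OF ij(3)] Jf_BA[OF ij(3)])
    finally show ?thesis using ij by simp
  next
    fix i j assume ij: "i \<in> {1..g}" "x = B i" "j \<in> {1..g}" "y = B j"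
    show ?thesis using relH_fext[OF rel_BB[OF ij(1,3)]] fext_wcomm[OF group_H fH B_Hg[OF ij(1)] B_Hg[OF ij(3)]] Jf_BB ij by simp
  qed
qed



lemma pi1_sub: "carrier (pi1 g) \<subseteq> carrier (FH g)"
  using surf_sub[of g] by (force simp: pi1_def FH_def carrier_free)

lemma iota_carrier: "w \<in> carrier (FH g) \<Longrightarrow> iota g w \<in> carrier (Hgrp g)"
  using iota_hom by (auto simp: hom_def Pi_def)

lemma iotaP: "iota g \<in> hom (pi1 g) (Hgrp g)"
proof (rule homI)
  fix x assume "x \<in> carrier (pi1 g)" then show "iota g x \<in> carrier (Hgrp g)"
    using pi1_sub iota_carrier by blast
next
  fix x y assume xy: "x \<in> carrier (pi1 g)" "y \<in> carrier (pi1 g)"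
  then have "x \<in> carrier (FH g)" "y \<in> carrier (FH g)" using pi1_sub by blast+
  then have "iota g (x \<otimes>\<^bsub>FH g\<^esub> y) = iota g x \<otimes>\<^bsub>Hgrp g\<^esub> iota g y" using iota_hom by (simp add: hom_def)
  then show "iota g (x \<otimes>\<^bsub>pi1 g\<^esub> y) = iota g x \<otimes>\<^bsub>Hgrp g\<^esub> iota g y" by (simp add: pi1_def FH_def)
qed

lemma sigH_central: "central (Hgrp g) (sigH g)"
proof -
  interpret H: group "Hgrp g" by (rule group_H)
  have sc: "sigH g \<in> carrier (Hgrp g)" by (rule sigH_carrier)
  have gen: "iota g [(y, True)] \<otimes>\<^bsub>Hgrp g\<^esub> sigH g = sigH g \<otimes>\<^bsub>Hgrp g\<^esub> iota g [(y, True)]"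
    if y: "y \<in> Hg_gens g" for y
  proof (cases "y = Sig")
    case True then show ?thesis by (simp add: sigH_def aH_def)
  next
    case False
    then have ys: "y \<in> surf_gens g" using y by (simp add: Hg_gens_def)
    have ac: "aH g y \<in> carrier (Hgrp g)" using aH_surf_carrier[OF ys] .
    have "sigH g \<otimes>\<^bsub>Hgrp g\<^esub> aH g y = \<one>\<^bsub>Hgrp g\<^esub> \<otimes>\<^bsub>Hgrp g\<^esub> (aH g y \<otimes>\<^bsub>Hgrp g\<^esub> sigH g)"
      using H.gcomm_eq[OF sc ac H.one_closed] H_sig_comm[OF ys] by simp
    then show ?thesis using ac sc by (simp add: aH_def)
  qed
  have "Z \<otimes>\<^bsub>Hgrp g\<^esub> sigH g = sigH g \<otimes>\<^bsub>Hgrp g\<^esub> Z" if Z: "Z \<in> carrier (Hgrp g)" for Z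
  proof -
    obtain w where w: "w \<in> carrier (FH g)" "Z = NH g #>\<^bsub>FH g\<^esub> w"
      using Z unfolding Hgrp_eq by (rule quot_carrier)
    have "iota g w \<otimes>\<^bsub>Hgrp g\<^esub> sigH g = sigH g \<otimes>\<^bsub>Hgrp g\<^esub> iota g w"
      by (rule central_ext[where G="Hgrp g" and f="iota g" and Y="Hg_gens g"])
        (use iota_hom w sc gen group_H in \<open>simp_all add: FH_def\<close>)
    then show ?thesis using w by (simp add: iota_def)
  qed
  then show ?thesis using sc by (simp add: central_def)
qed

lemma iotaP': "iota g \<in> hom (free_group (surf_gens g)) (Hgrp g)"
  using iotaP by (simp add: pi1_def)

lemma stepB:
  assumes y: "y \<in> surf_gens g" and u: "u \<in> carrier (pi1 g)"
  shows "iota g u \<otimes>\<^bsub>Hgrp g\<^esub> aH g y =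
    sigH g [^]\<^bsub>Hgrp g\<^esub> (2 * omega g u [(y, True)]) \<otimes>\<^bsub>Hgrp g\<^esub> (aH g y \<otimes>\<^bsub>Hgrp g\<^esub> iota g u)"
proof (rule bilin_ext[OF group_H iotaP' aH_surf_carrier[OF y] sigH_central, where \<phi> = "\<lambda>u. 2 * omega g u [(y, True)]"])
  show "u \<in> carrier (free_group (surf_gens g))" using u by (simp add: pi1_def)
  show "2 * omega g [] [(y, True)] = 0" by simp
  show "\<And>x w. 2 * omega g (red (x # w)) [(y, True)] = 2 * omega g [x] [(y, True)] + 2 * omega g w [(y, True)]"
    by (simp add: omega_red_Cons)
  show "\<And>z. 2 * omega g [(z, False)] [(y, True)] = - (2 * omega g [(z, True)] [(y, True)])"
    by (simp add: omega_neg_letter)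
  fix z assume z: "z \<in> surf_gens g"
  interpret H: group "Hgrp g" by (rule group_H)
  have ac: "aH g z \<in> carrier (Hgrp g)" "aH g y \<in> carrier (Hgrp g)" using aH_surf_carrier z y by auto
  have pc: "sigH g [^]\<^bsub>Hgrp g\<^esub> (2 * Jf g z y) \<in> carrier (Hgrp g)" using sigH_carrier by simp
  show "iota g [(z, True)] \<otimes>\<^bsub>Hgrp g\<^esub> aH g y =
    sigH g [^]\<^bsub>Hgrp g\<^esub> (2 * omega g [(z, True)] [(y, True)]) \<otimes>\<^bsub>Hgrp g\<^esub> (aH g y \<otimes>\<^bsub>Hgrp g\<^esub> iota g [(z, True)])"
    using H.gcomm_eq[OF ac pc] H_gen_comm[OF z y] by (simp add: omega_letters aH_def)
qed

lemma stepC: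
  assumes u: "u \<in> carrier (pi1 g)" and v: "v \<in> carrier (pi1 g)"
  shows "iota g v \<otimes>\<^bsub>Hgrp g\<^esub> iota g u =
    sigH g [^]\<^bsub>Hgrp g\<^esub> (2 * omega g v u) \<otimes>\<^bsub>Hgrp g\<^esub> (iota g u \<otimes>\<^bsub>Hgrp g\<^esub> iota g v)"
proof -
  interpret H: group "Hgrp g" by (rule group_H)
  have iu: "iota g u \<in> carrier (Hgrp g)" using iotaP u by (auto simp: hom_def Pi_def)
  show ?thesis
  proof (rule bilin_ext[OF group_H iotaP' iu sigH_central, where \<phi> = "\<lambda>v. 2 * omega g v u"])
    show "v \<in> carrier (free_group (surf_gens g))" using v by (simp add: pi1_def)
    show "2 * omega g [] u = 0" by simp
    show "\<And>x w. 2 * omega g (red (x # w)) u = 2 * omega g [x] u + 2 * omega g w u"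
      by (simp add: omega_red_Cons)
    show "\<And>z. 2 * omega g [(z, False)] u = - (2 * omega g [(z, True)] u)"
      by (simp add: omega_neg_letter)
    fix z assume z: "z \<in> surf_gens g"
    have ac: "aH g z \<in> carrier (Hgrp g)" using aH_surf_carrier z by auto
    have sc: "sigH g \<in> carrier (Hgrp g)" by (rule sigH_carrier)
    have "aH g z \<otimes>\<^bsub>Hgrp g\<^esub> iota g u =
      inv\<^bsub>Hgrp g\<^esub> (sigH g [^]\<^bsub>Hgrp g\<^esub> (2 * omega g u [(z, True)])) \<otimes>\<^bsub>Hgrp g\<^esub> (iota g u \<otimes>\<^bsub>Hgrp g\<^esub> aH g z)"
      by (rule H.rel_sym[OF iu ac H.central_pow[OF sigH_central] stepB[OF z u]])
    also have "inv\<^bsub>Hgrp g\<^esub> (sigH g [^]\<^bsub>Hgrp g\<^esub> (2 * omega g u [(z, True)])) = sigH g [^]\<^bsub>Hgrp g\<^esub> (2 * omega g [(z, True)] u)"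
      using sc H.int_pow_neg[OF sc, of "2 * omega g u [(z, True)]"] omega_antisym[of g u "[(z, True)]"] by simp
    finally show "iota g [(z, True)] \<otimes>\<^bsub>Hgrp g\<^esub> iota g u =
      sigH g [^]\<^bsub>Hgrp g\<^esub> (2 * omega g [(z, True)] u) \<otimes>\<^bsub>Hgrp g\<^esub> (iota g u \<otimes>\<^bsub>Hgrp g\<^esub> iota g [(z, True)])"
      by (simp add: aH_def)
  qed
qed

lemma KEY1:
  assumes u: "u \<in> carrier (pi1 g)" and v: "v \<in> carrier (pi1 g)"
  shows "gcomm (Hgrp g) (iota g u) (iota g v) = sigH g [^]\<^bsub>Hgrp g\<^esub> (2 * omega g u v)"
proof -
  interpret H: group "Hgrp g" by (rule group_H)
  have iu: "iota g u \<in> carrier (Hgrp g)" "iota g v \<in> carrier (Hgrp g)" using iotaP u v by (auto simp: hom_def Pi_def)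
  have pc: "sigH g [^]\<^bsub>Hgrp g\<^esub> (2 * omega g u v) \<in> carrier (Hgrp g)" using sigH_carrier by simp
  show ?thesis using H.gcomm_eq[OF iu pc] stepC[OF v u] by simp
qed



lemma red_mid[simp]: "red (u @ red v @ w) = red (u @ v @ w)"
  by (metis red_append_left red_append_right)

lemma red_mid2[simp]: "red (a @ b @ red c @ d) = red (a @ b @ c @ d)"
  using red_mid[of "a @ b" c d] by simp
lemma red_mid3[simp]: "red (a @ b @ c @ red d) = red (a @ b @ c @ d)"
  using red_append_right[of "a @ b @ c" d] by simp

lemma wcomm_gcomm:
  assumes "u \<in> carrier (free_group Y)" "v \<in> carrier (free_group Y)"
  shows "wcomm u v = gcomm (free_group Y) u v"
  using assms by (simp add: gcomm_def wcomm_def inv_free red_append_left)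

lemma hom_gcomm:
  assumes G: "group G" and H: "group H" and h: "h \<in> hom G H" and a: "a \<in> carrier G" and b: "b \<in> carrier G"
  shows "h (gcomm G a b) = gcomm H (h a) (h b)"
proof -
  interpret gh: group_hom G H h using G H h by (simp add: group_hom_def group_hom_axioms_def)
  show ?thesis using a b by (simp add: gcomm_def)
qed

lemma group_pi1: "group (pi1 g)" by (simp add: pi1_def free_group_is_group)

lemma group_PxS: "group (PxS g)" by (simp add: PxS_def DirProd_group group_pi1)

lemma carrier_PxS: "carrier (PxS g) = carrier (pi1 g) \<times> UNIV" by (simp add: PxS_def)
lemma mult_PxS: "(a, b) \<otimes>\<^bsub>PxS g\<^esub> (c, d) = (a \<otimes>\<^bsub>pi1 g\<^esub> c, b + d)" by (simp add: PxS_def)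
lemma one_PxS: "\<one>\<^bsub>PxS g\<^esub> = ([], 0)" by (simp add: PxS_def pi1_def)
lemma inv_PxS: "a \<in> carrier (pi1 g) \<Longrightarrow> inv\<^bsub>PxS g\<^esub> (a, b) = (inv\<^bsub>pi1 g\<^esub> a, - b)"
  by (simp add: PxS_def group_pi1)

lemma wcomm_pi1: "u \<in> carrier (pi1 g) \<Longrightarrow> v \<in> carrier (pi1 g) \<Longrightarrow> wcomm u v \<in> carrier (pi1 g)"
  using wcomm_gcomm[of u "surf_gens g" v] group.gcomm_closed[OF group_pi1] by (simp add: pi1_def)

lemma Qrel_carrier: "Qrel g \<subseteq> carrier (PxS g)"
  using wcomm_pi1 by (auto simp: Qrel_def carrier_PxS)

definition NQ :: "nat \<Rightarrow> (gen fword \<times> int) set" where "NQ g = normal_closure (PxS g) (Qrel g)"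
definition cQ :: "nat \<Rightarrow> gen fword \<times> int \<Rightarrow> (gen fword \<times> int) set" where "cQ g x = NQ g #>\<^bsub>PxS g\<^esub> x"

lemma NQ_normal: "NQ g \<lhd> PxS g"
  unfolding NQ_def by (rule group.nc_normal[OF group_PxS Qrel_carrier])

lemma Qgrp_eq: "Qgrp g = PxS g Mod NQ g" by (simp add: Qgrp_def NQ_def)

lemma group_Q: "group (Qgrp g)"
  unfolding Qgrp_eq by (rule normal.factorgroup_is_group[OF NQ_normal])

lemma cQ_hom: "cQ g \<in> hom (PxS g) (Qgrp g)"
  unfolding Qgrp_eq cQ_def[abs_def] by (rule normal.r_coset_hom_Mod[OF NQ_normal])

lemma Qclass_cQ: "Qclass g x = cQ g x" by (simp add: Qclass_def cQ_def NQ_def)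

lemma cQ_carrier: "x \<in> carrier (PxS g) \<Longrightarrow> cQ g x \<in> carrier (Qgrp g)"
  by (rule hom_in_carrier[OF cQ_hom])

lemma cQ_mult: "x \<in> carrier (PxS g) \<Longrightarrow> y \<in> carrier (PxS g) \<Longrightarrow>
   cQ g (x \<otimes>\<^bsub>PxS g\<^esub> y) = cQ g x \<otimes>\<^bsub>Qgrp g\<^esub> cQ g y"
  using cQ_hom by (simp add: hom_def)

lemma cQ_rel: "u \<in> carrier (pi1 g) \<Longrightarrow> v \<in> carrier (pi1 g) \<Longrightarrow>
   cQ g (wcomm u v, - 2 * omega g u v) = \<one>\<^bsub>Qgrp g\<^esub>"
proof -
  assume u: "u \<in> carrier (pi1 g)" and v: "v \<in> carrier (pi1 g)"
  have m: "(wcomm u v, - 2 * omega g u v) \<in> Qrel g" using u v by (auto simp: Qrel_def)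
  then have c: "(wcomm u v, - 2 * omega g u v) \<in> carrier (PxS g)" using Qrel_carrier by blast
  have "(wcomm u v, - 2 * omega g u v) \<in> NQ g" unfolding NQ_def
    by (rule group.nc_incl[OF group_PxS Qrel_carrier m])
  then show ?thesis using quot_one_iff[OF NQ_normal c] by (simp add: cQ_def Qgrp_eq)
qed

lemma gcomm_PxS:
  assumes u: "u \<in> carrier (pi1 g)" and v: "v \<in> carrier (pi1 g)"
  shows "gcomm (PxS g) (u, a) (v, b) = (wcomm u v, 0)"
proof -
  interpret P: group "pi1 g" by (rule group_pi1)
  have "gcomm (PxS g) (u, a) (v, b) = (gcomm (pi1 g) u v, 0)"
    using u v by (simp add: gcomm_def inv_PxS mult_PxS)
  then show ?thesis using wcomm_gcomm[of u "surf_gens g" v] u v by (simp add: pi1_def)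
qed

lemma KEY1Q:
  assumes u: "u \<in> carrier (pi1 g)" and v: "v \<in> carrier (pi1 g)"
  shows "gcomm (Qgrp g) (cQ g (u, 0)) (cQ g (v, 0)) = cQ g ([], 2 * omega g u v)"
proof -
  interpret Q: group "Qgrp g" by (rule group_Q)
  have pc: "(u, 0) \<in> carrier (PxS g)" "(v, 0) \<in> carrier (PxS g)" using u v by (simp_all add: carrier_PxS)
  have "gcomm (Qgrp g) (cQ g (u, 0)) (cQ g (v, 0)) = cQ g (gcomm (PxS g) (u, 0) (v, 0))"
    using hom_gcomm[OF group_PxS group_Q cQ_hom pc] by simp
  also have "\<dots> = cQ g (wcomm u v, 0)" using gcomm_PxS[OF u v] by simp
  also have "(wcomm u v, 0) = (wcomm u v, - 2 * omega g u v) \<otimes>\<^bsub>PxS g\<^esub> ([], 2 * omega g u v)"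
    using wcomm_pi1[OF u v] by (simp add: mult_PxS pi1_def carrier_free)
  also have "cQ g \<dots> = cQ g (wcomm u v, - 2 * omega g u v) \<otimes>\<^bsub>Qgrp g\<^esub> cQ g ([], 2 * omega g u v)"
    by (rule cQ_mult) (use wcomm_pi1[OF u v] in \<open>simp_all add: carrier_PxS pi1_def carrier_free\<close>)
  also have "\<dots> = cQ g ([], 2 * omega g u v)"
    using cQ_rel[OF u v] cQ_carrier[of "([], 2 * omega g u v)" g] by (simp add: carrier_PxS pi1_def carrier_free)
  finally show ?thesis .
qed

definition sigQ :: "nat \<Rightarrow> (gen fword \<times> int) set" where "sigQ g = cQ g ([], 1)"

lemma nil_PxS: "([], k) \<in> carrier (PxS g)" by (simp add: carrier_PxS pi1_def carrier_free)

lemma sigQ_pow: "cQ g ([], k) = sigQ g [^]\<^bsub>Qgrp g\<^esub> k"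
proof -
  interpret Q: group "Qgrp g" by (rule group_Q)
  have sc: "sigQ g \<in> carrier (Qgrp g)" by (simp add: sigQ_def cQ_carrier nil_PxS)
  show ?thesis
  proof (induction k rule: int_induct[where k = 0])
    case base
    have "cQ g ([], 0) = \<one>\<^bsub>Qgrp g\<^esub>"
      using group_hom.hom_one[of "PxS g" "Qgrp g" "cQ g"] cQ_hom group_PxS group_Q
      by (simp add: group_hom_def group_hom_axioms_def one_PxS)
    then show ?case by simp
  next
    case (step1 i)
    have "cQ g ([], i + 1) = cQ g (([], i) \<otimes>\<^bsub>PxS g\<^esub> ([], 1))" by (simp add: mult_PxS pi1_def)
    also have "\<dots> = cQ g ([], i) \<otimes>\<^bsub>Qgrp g\<^esub> sigQ g" using cQ_mult nil_PxS by (simp add: sigQ_def)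
    also have "\<dots> = sigQ g [^]\<^bsub>Qgrp g\<^esub> (i + 1)" using step1 Q.int_pow_mult[OF sc, of i 1] sc by simp
    finally show ?case .
  next
    case (step2 i)
    have "cQ g ([], i - 1) = cQ g (([], i) \<otimes>\<^bsub>PxS g\<^esub> ([], -1))" by (simp add: mult_PxS pi1_def)
    also have "\<dots> = cQ g ([], i) \<otimes>\<^bsub>Qgrp g\<^esub> cQ g ([], -1)" using cQ_mult nil_PxS by simp
    also have "cQ g ([], -1) = inv\<^bsub>Qgrp g\<^esub> sigQ g"
    proof -
      have "inv\<^bsub>PxS g\<^esub> ([], 1) = ([], -1)" using inv_PxS[of "[]" g 1]
        by (simp add: pi1_def carrier_free inv_free)
      then show ?thesis
        using group_hom.hom_inv[of "PxS g" "Qgrp g" "cQ g" "([], 1)"] cQ_hom group_PxS group_Q nil_PxS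
        by (simp add: group_hom_def group_hom_axioms_def sigQ_def)
    qed
    also have "cQ g ([], i) \<otimes>\<^bsub>Qgrp g\<^esub> inv\<^bsub>Qgrp g\<^esub> sigQ g = sigQ g [^]\<^bsub>Qgrp g\<^esub> (i - 1)"
      using step2 Q.int_pow_mult[OF sc, of i "-1"] sc by (simp add: Q.int_pow_neg)
    finally show ?case .
  qed
qed



lemma hom_restrict_pi1:
  assumes h: "h \<in> hom (FH g) G" shows "h \<in> hom (pi1 g) G"
proof (rule homI)
  fix x assume "x \<in> carrier (pi1 g)"
  then have "x \<in> carrier (FH g)" using pi1_sub by blast
  then show "h x \<in> carrier G" by (rule hom_in_carrier[OF h])
next
  fix x y assume xy: "x \<in> carrier (pi1 g)" "y \<in> carrier (pi1 g)"
  then have "x \<in> carrier (FH g)" "y \<in> carrier (FH g)" using pi1_sub by blast+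
  then have "h (x \<otimes>\<^bsub>FH g\<^esub> y) = h x \<otimes>\<^bsub>G\<^esub> h y" by (rule hom_mult[OF h])
  then show "h (x \<otimes>\<^bsub>pi1 g\<^esub> y) = h x \<otimes>\<^bsub>G\<^esub> h y" by (simp add: pi1_def FH_def)
qed

definition Phi0 :: "nat \<Rightarrow> gen fword \<times> int \<Rightarrow> gen fword set" where
  "Phi0 g x = iota g (fst x) \<otimes>\<^bsub>Hgrp g\<^esub> sigH g [^]\<^bsub>Hgrp g\<^esub> snd x"

lemma Phi0_hom: "Phi0 g \<in> hom (PxS g) (Hgrp g)"
proof (rule homI)
  interpret H: group "Hgrp g" by (rule group_H)
  have sc: "sigH g \<in> carrier (Hgrp g)" by (rule sigH_carrier)
  fix x assume "x \<in> carrier (PxS g)"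
  then have "fst x \<in> carrier (pi1 g)" by (auto simp: carrier_PxS)
  then show "Phi0 g x \<in> carrier (Hgrp g)" using hom_in_carrier[OF iotaP] sc by (simp add: Phi0_def)
next
  interpret H: group "Hgrp g" by (rule group_H)
  have sc: "sigH g \<in> carrier (Hgrp g)" by (rule sigH_carrier)
  fix x y assume "x \<in> carrier (PxS g)" "y \<in> carrier (PxS g)"
  then obtain a b c d where xy: "x = (a, b)" "y = (c, d)" "a \<in> carrier (pi1 g)" "c \<in> carrier (pi1 g)"
    by (auto simp: carrier_PxS)
  have ia: "iota g a \<in> carrier (Hgrp g)" "iota g c \<in> carrier (Hgrp g)" using hom_in_carrier[OF iotaP] xy by auto
  have pb: "sigH g [^]\<^bsub>Hgrp g\<^esub> b \<in> carrier (Hgrp g)" "sigH g [^]\<^bsub>Hgrp g\<^esub> d \<in> carrier (Hgrp g)" using sc by auto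
  have cb: "central (Hgrp g) (sigH g [^]\<^bsub>Hgrp g\<^esub> b)" by (rule H.central_pow[OF sigH_central])
  have "Phi0 g (x \<otimes>\<^bsub>PxS g\<^esub> y) = (iota g a \<otimes>\<^bsub>Hgrp g\<^esub> iota g c) \<otimes>\<^bsub>Hgrp g\<^esub>
      (sigH g [^]\<^bsub>Hgrp g\<^esub> b \<otimes>\<^bsub>Hgrp g\<^esub> sigH g [^]\<^bsub>Hgrp g\<^esub> d)"
  proof -
    have e1: "x \<otimes>\<^bsub>PxS g\<^esub> y = (a \<otimes>\<^bsub>pi1 g\<^esub> c, b + d)" using xy by (simp add: mult_PxS)
    have e2: "iota g (a \<otimes>\<^bsub>pi1 g\<^esub> c) = iota g a \<otimes>\<^bsub>Hgrp g\<^esub> iota g c" by (rule hom_mult[OF iotaP xy(3,4)])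
    have e3: "sigH g [^]\<^bsub>Hgrp g\<^esub> (b + d) = sigH g [^]\<^bsub>Hgrp g\<^esub> b \<otimes>\<^bsub>Hgrp g\<^esub> sigH g [^]\<^bsub>Hgrp g\<^esub> d"
      by (rule H.int_pow_mult[OF sc])
    show ?thesis by (simp only: Phi0_def e1 e2 e3 fst_conv snd_conv)
  qed
  also have "\<dots> = iota g a \<otimes>\<^bsub>Hgrp g\<^esub> (iota g c \<otimes>\<^bsub>Hgrp g\<^esub> (sigH g [^]\<^bsub>Hgrp g\<^esub> b \<otimes>\<^bsub>Hgrp g\<^esub> sigH g [^]\<^bsub>Hgrp g\<^esub> d))"
    using ia pb by (simp add: H.m_assoc)
  also have "iota g c \<otimes>\<^bsub>Hgrp g\<^esub> (sigH g [^]\<^bsub>Hgrp g\<^esub> b \<otimes>\<^bsub>Hgrp g\<^esub> sigH g [^]\<^bsub>Hgrp g\<^esub> d) =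
      sigH g [^]\<^bsub>Hgrp g\<^esub> b \<otimes>\<^bsub>Hgrp g\<^esub> (iota g c \<otimes>\<^bsub>Hgrp g\<^esub> sigH g [^]\<^bsub>Hgrp g\<^esub> d)"
    by (rule H.comm_left[OF cb ia(2) pb(2)])
  also have "iota g a \<otimes>\<^bsub>Hgrp g\<^esub> (sigH g [^]\<^bsub>Hgrp g\<^esub> b \<otimes>\<^bsub>Hgrp g\<^esub> (iota g c \<otimes>\<^bsub>Hgrp g\<^esub> sigH g [^]\<^bsub>Hgrp g\<^esub> d)) =
     Phi0 g x \<otimes>\<^bsub>Hgrp g\<^esub> Phi0 g y"
    using ia pb unfolding xy(1,2) Phi0_def fst_conv snd_conv by (simp add: H.m_assoc)
  finally show "Phi0 g (x \<otimes>\<^bsub>PxS g\<^esub> y) = Phi0 g x \<otimes>\<^bsub>Hgrp g\<^esub> Phi0 g y" .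
qed

lemma Phi0_kills: "n \<in> NQ g \<Longrightarrow> Phi0 g n = \<one>\<^bsub>Hgrp g\<^esub>"
proof -
  assume n: "n \<in> NQ g"
  interpret H: group "Hgrp g" by (rule group_H)
  have sc: "sigH g \<in> carrier (Hgrp g)" by (rule sigH_carrier)
  show ?thesis
  proof (rule nc_kills[OF group_PxS group_H Phi0_hom Qrel_carrier _ n[unfolded NQ_def]])
    fix s assume "s \<in> Qrel g"
    then obtain u v where s: "s = (wcomm u v, - 2 * omega g u v)" "u \<in> carrier (pi1 g)" "v \<in> carrier (pi1 g)"
      by (auto simp: Qrel_def)
    have "iota g (wcomm u v) = gcomm (Hgrp g) (iota g u) (iota g v)"
      using wcomm_gcomm[of u "surf_gens g" v] s hom_gcomm[OF group_pi1 group_H iotaP s(2) s(3)]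
      by (simp add: pi1_def)
    also have "\<dots> = sigH g [^]\<^bsub>Hgrp g\<^esub> (2 * omega g u v)" by (rule KEY1[OF s(2,3)])
    finally have "Phi0 g s = sigH g [^]\<^bsub>Hgrp g\<^esub> (2 * omega g u v) \<otimes>\<^bsub>Hgrp g\<^esub> sigH g [^]\<^bsub>Hgrp g\<^esub> (- 2 * omega g u v)"
      using s by (simp add: Phi0_def)
    also have "\<dots> = sigH g [^]\<^bsub>Hgrp g\<^esub> (2 * omega g u v + - 2 * omega g u v)"
      by (simp only: H.int_pow_mult[OF sc, symmetric])
    also have "\<dots> = \<one>\<^bsub>Hgrp g\<^esub>" by simp
    finally show "Phi0 g s = \<one>\<^bsub>Hgrp g\<^esub>" .
  qed
qed

definition PhiQ :: "nat \<Rightarrow> (gen fword \<times> int) set \<Rightarrow> gen fword set" where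
  "PhiQ g Z = the_elem (Phi0 g ` Z)"

lemma PhiQ_hom: "PhiQ g \<in> hom (Qgrp g) (Hgrp g)"
  unfolding Qgrp_eq PhiQ_def[abs_def]
  by (rule quot_hom(1)[OF NQ_normal group_H Phi0_hom Phi0_kills])

lemma PhiQ_cQ: "x \<in> carrier (PxS g) \<Longrightarrow> PhiQ g (cQ g x) = Phi0 g x"
  unfolding PhiQ_def cQ_def
  by (rule quot_hom(2)[OF NQ_normal group_H Phi0_hom Phi0_kills])



definition fq :: "nat \<Rightarrow> gen \<Rightarrow> (gen fword \<times> int) set" where
  "fq g y = (if y = Sig then sigQ g else cQ g ([(y, True)], 0))"

lemma letter_pi1: "y \<in> surf_gens g \<Longrightarrow> [(y, True)] \<in> carrier (pi1 g)"
  by (simp add: pi1_def letter_in_free)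

lemma fq_carrier: "fq g ` Hg_gens g \<subseteq> carrier (Qgrp g)"
proof
  fix z assume "z \<in> fq g ` Hg_gens g"
  then obtain y where y: "y \<in> Hg_gens g" "z = fq g y" by blast
  show "z \<in> carrier (Qgrp g)"
  proof (cases "y = Sig")
    case True then show ?thesis using y by (simp add: fq_def sigQ_def cQ_carrier nil_PxS)
  next
    case False
    then have "y \<in> surf_gens g" using y by (simp add: Hg_gens_def)
    then show ?thesis using y False by (simp add: fq_def cQ_carrier carrier_PxS letter_pi1)
  qed
qed

definition Psi0 :: "nat \<Rightarrow> gen fword \<Rightarrow> (gen fword \<times> int) set" where
  "Psi0 g = fext (Qgrp g) (fq g)"

lemma Psi0_hom: "Psi0 g \<in> hom (FH g) (Qgrp g)"
  unfolding Psi0_def FH_def by (rule group.fext_hom[OF group_Q fq_carrier])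

lemma wcomm_nil: "wcomm [] v = []"
  using red_winv_mid[of "[]" v "[]"] by (simp add: wcomm_def)

lemma Psi0_kills: "n \<in> NH g \<Longrightarrow> Psi0 g n = \<one>\<^bsub>Qgrp g\<^esub>"
proof -
  assume n: "n \<in> NH g"
  interpret Q: group "Qgrp g" by (rule group_Q)
  show ?thesis
  proof (rule nc_kills[OF group_FH group_Q Psi0_hom rels_carrier _ n[unfolded NH_def]])
    fix s assume "s \<in> red ` Hg_rels g"
    then obtain r where r: "r \<in> Hg_rels g" "s = red r" by blast
    have "fext (Qgrp g) (fq g) (red r) = \<one>\<^bsub>Qgrp g\<^esub>"
    proof (rule rels_killed[OF group_Q fq_carrier _ _ r(1)])
      fix x assume x: "x \<in> surf_gens g"
      have xs: "x \<noteq> Sig" using x Sig_notin_surf by blast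
      have "gcomm (Qgrp g) (cQ g ([], 1)) (cQ g ([(x, True)], 0)) = cQ g (gcomm (PxS g) ([], 1) ([(x, True)], 0))"
        using hom_gcomm[OF group_PxS group_Q cQ_hom nil_PxS] letter_pi1[OF x] by (simp add: carrier_PxS)
      also have "\<dots> = cQ g ([], 0)"
      proof -
        have "gcomm (PxS g) ([], 1) ([(x, True)], 0) = (wcomm [] [(x, True)], 0)"
          by (rule gcomm_PxS) (use letter_pi1[OF x] in \<open>simp_all add: pi1_def carrier_free\<close>)
        moreover have "wcomm [] [(x, True)] = []" by (rule wcomm_nil)
        ultimately show ?thesis by simp
      qed
      also have "\<dots> = \<one>\<^bsub>Qgrp g\<^esub>" using sigQ_pow[of g 0] by simp
      finally show "gcomm (Qgrp g) (fq g Sig) (fq g x) = \<one>\<^bsub>Qgrp g\<^esub>" using xs by (simp add: fq_def sigQ_def)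
    next
      fix x y assume x: "x \<in> surf_gens g" and y: "y \<in> surf_gens g"
      have xs: "x \<noteq> Sig" "y \<noteq> Sig" using x y Sig_notin_surf by blast+
      have "gcomm (Qgrp g) (cQ g ([(x, True)], 0)) (cQ g ([(y, True)], 0)) = cQ g ([], 2 * omega g [(x, True)] [(y, True)])"
        by (rule KEY1Q[OF letter_pi1[OF x] letter_pi1[OF y]])
      then show "gcomm (Qgrp g) (fq g x) (fq g y) = fq g Sig [^]\<^bsub>Qgrp g\<^esub> (2 * Jf g x y)"
        using xs by (simp add: fq_def omega_letters sigQ_pow)
    qed
    then show "Psi0 g s = \<one>\<^bsub>Qgrp g\<^esub>" using r by (simp add: Psi0_def)
  qed
qed

definition PsiH :: "nat \<Rightarrow> gen fword set \<Rightarrow> (gen fword \<times> int) set" where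
  "PsiH g Z = the_elem (Psi0 g ` Z)"

lemma PsiH_hom: "PsiH g \<in> hom (Hgrp g) (Qgrp g)"
  unfolding Hgrp_eq PsiH_def[abs_def]
  by (rule quot_hom(1)[OF NH_normal group_Q Psi0_hom Psi0_kills])

lemma PsiH_iota: "w \<in> carrier (FH g) \<Longrightarrow> PsiH g (iota g w) = Psi0 g w"
  unfolding PsiH_def iota_def
  by (rule quot_hom(2)[OF NH_normal group_Q Psi0_hom Psi0_kills])

lemma letter_FH: "y \<in> Hg_gens g \<Longrightarrow> [(y, True)] \<in> carrier (FH g)"
  by (simp add: FH_def letter_in_free)

lemma Phi_Psi: "Z \<in> carrier (Hgrp g) \<Longrightarrow> PhiQ g (PsiH g Z) = Z"
proof -
  assume Z: "Z \<in> carrier (Hgrp g)"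
  interpret H: group "Hgrp g" by (rule group_H)
  obtain w where w: "w \<in> carrier (FH g)" "Z = NH g #>\<^bsub>FH g\<^esub> w"
    using Z unfolding Hgrp_eq by (rule quot_carrier)
  have Ziota: "Z = iota g w" using w by (simp add: iota_def)
  have "PhiQ g (Psi0 g w) = iota g w"
  proof (rule free_hom_unique[OF group_H])
    show "(\<lambda>w. PhiQ g (Psi0 g w)) \<in> hom (free_group (Hg_gens g)) (Hgrp g)"
      using hom_compose[OF Psi0_hom PhiQ_hom] by (simp add: FH_def comp_def)
    show "iota g \<in> hom (free_group (Hg_gens g)) (Hgrp g)" using iota_hom by (simp add: FH_def)
    show "w \<in> carrier (free_group (Hg_gens g))" using w by (simp add: FH_def)
    fix y assume y: "y \<in> Hg_gens g"
    have pe: "Psi0 g [(y, True)] = fq g y"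
      unfolding Psi0_def by (rule group.fext_letter[OF group_Q fq_carrier y])
    show "PhiQ g (Psi0 g [(y, True)]) = iota g [(y, True)]"
    proof (cases "y = Sig")
      case True
      have "PhiQ g (sigQ g) = Phi0 g ([], 1)" unfolding sigQ_def by (rule PhiQ_cQ[OF nil_PxS])
      also have "\<dots> = iota g [] \<otimes>\<^bsub>Hgrp g\<^esub> sigH g" using sigH_carrier group.int_pow_1[OF group_H] by (simp add: Phi0_def)
      also have "iota g [] = \<one>\<^bsub>Hgrp g\<^esub>"
        using group_hom.hom_one[of "FH g" "Hgrp g" "iota g"] iota_hom group_FH group_H
        by (simp add: group_hom_def group_hom_axioms_def FH_def)
      finally show ?thesis using pe True sigH_carrier H.l_one by (simp add: fq_def sigH_def aH_def)
    next
      case False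
      then have ys: "y \<in> surf_gens g" using y by (simp add: Hg_gens_def)
      have "PhiQ g (cQ g ([(y, True)], 0)) = Phi0 g ([(y, True)], 0)"
        by (rule PhiQ_cQ) (simp add: carrier_PxS letter_pi1[OF ys])
      also have "\<dots> = iota g [(y, True)]"
        using iota_carrier[OF letter_FH[OF y]] H.r_one by (simp add: Phi0_def)
      finally show ?thesis using pe False by (simp add: fq_def)
    qed
  qed
  then show ?thesis using Ziota PsiH_iota[OF w(1)] by simp
qed

lemma Psi0_pi1: "w \<in> carrier (pi1 g) \<Longrightarrow> Psi0 g w = cQ g (w, 0)"
proof -
  assume w: "w \<in> carrier (pi1 g)"
  have incl: "(\<lambda>w. (w, 0::int)) \<in> hom (pi1 g) (PxS g)"
    by (rule homI) (simp_all add: carrier_PxS mult_PxS)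
  show ?thesis
  proof (rule free_hom_unique[OF group_Q])
    show "Psi0 g \<in> hom (free_group (surf_gens g)) (Qgrp g)"
      using hom_restrict_pi1[OF Psi0_hom] by (simp add: pi1_def)
    show "(\<lambda>w. cQ g (w, 0)) \<in> hom (free_group (surf_gens g)) (Qgrp g)"
      using hom_compose[OF incl cQ_hom] by (simp add: pi1_def comp_def)
    show "w \<in> carrier (free_group (surf_gens g))" using w by (simp add: pi1_def)
    fix y assume y: "y \<in> surf_gens g"
    have "y \<in> Hg_gens g" using y surf_sub by blast
    then have "Psi0 g [(y, True)] = fq g y"
      unfolding Psi0_def by (rule group.fext_letter[OF group_Q fq_carrier])
    then show "Psi0 g [(y, True)] = cQ g ([(y, True)], 0)"
      using y Sig_notin_surf by (auto simp: fq_def)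
  qed
qed

lemma Psi_Phi: "Z \<in> carrier (Qgrp g) \<Longrightarrow> PsiH g (PhiQ g Z) = Z"
proof -
  assume Z: "Z \<in> carrier (Qgrp g)"
  interpret Q: group "Qgrp g" by (rule group_Q)
  interpret H: group "Hgrp g" by (rule group_H)
  interpret ps: group_hom "Hgrp g" "Qgrp g" "PsiH g"
    using PsiH_hom group_H group_Q by (simp add: group_hom_def group_hom_axioms_def)
  obtain x where x: "x \<in> carrier (PxS g)" "Z = NQ g #>\<^bsub>PxS g\<^esub> x"
    using Z unfolding Qgrp_eq by (rule quot_carrier)
  obtain w k where wk: "x = (w, k)" "w \<in> carrier (pi1 g)" using x by (auto simp: carrier_PxS)
  have Zc: "Z = cQ g (w, k)" using x wk by (simp add: cQ_def)
  have wF: "w \<in> carrier (FH g)" using wk pi1_sub by blast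
  have "PhiQ g Z = iota g w \<otimes>\<^bsub>Hgrp g\<^esub> sigH g [^]\<^bsub>Hgrp g\<^esub> k"
    using PhiQ_cQ[OF x(1)] Zc wk by (simp add: Phi0_def)
  then have "PsiH g (PhiQ g Z) = PsiH g (iota g w) \<otimes>\<^bsub>Qgrp g\<^esub> PsiH g (sigH g) [^]\<^bsub>Qgrp g\<^esub> k"
    using iota_carrier[OF wF] sigH_carrier by (simp add: ps.hom_int_pow)
  also have "PsiH g (iota g w) = cQ g (w, 0)" using PsiH_iota[OF wF] Psi0_pi1[OF wk(2)] by simp
  also have "PsiH g (sigH g) = sigQ g"
  proof -
    have "PsiH g (sigH g) = Psi0 g [(Sig, True)]"
      unfolding sigH_def aH_def by (rule PsiH_iota[OF letter_FH[OF Sig_Hg]])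
    also have "\<dots> = fq g Sig" unfolding Psi0_def by (rule group.fext_letter[OF group_Q fq_carrier Sig_Hg])
    finally show ?thesis by (simp add: fq_def)
  qed
  also have "sigQ g [^]\<^bsub>Qgrp g\<^esub> k = cQ g ([], k)" by (simp add: sigQ_pow)
  also have "cQ g (w, 0) \<otimes>\<^bsub>Qgrp g\<^esub> cQ g ([], k) = cQ g ((w, 0) \<otimes>\<^bsub>PxS g\<^esub> ([], k))"
    by (rule cQ_mult[symmetric]) (use wk(2) in \<open>simp_all add: carrier_PxS pi1_def carrier_free\<close>)
  also have "(w, 0) \<otimes>\<^bsub>PxS g\<^esub> ([], k) = (w, k)"
    using wk(2) by (simp add: mult_PxS pi1_def carrier_free)
  finally show ?thesis using Zc by simp
qed

lemma PhiQ_iso: "PhiQ g \<in> iso (Qgrp g) (Hgrp g)"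
proof -
  have "bij_betw (PhiQ g) (carrier (Qgrp g)) (carrier (Hgrp g))"
    by (rule bij_betw_byWitness[where f' = "PsiH g"])
       (use Psi_Phi Phi_Psi hom_in_carrier[OF PhiQ_hom] hom_in_carrier[OF PsiH_hom] in auto)
  then show ?thesis using PhiQ_hom by (simp add: iso_def)
qed



section \<open>A Heisenberg group and the boundary word\<close>

definition heis :: "(int \<times> int \<times> int) monoid" where
  "heis = \<lparr>carrier = UNIV,
     monoid.mult = (\<lambda>x y. (fst x + fst y, fst (snd x) + fst (snd y), snd (snd x) + snd (snd y) + fst x * fst (snd y))),
     one = (0, 0, 0)\<rparr>"

lemma heis_mult: "(a, b, c) \<otimes>\<^bsub>heis\<^esub> (a', b', c') = (a + a', b + b', c + c' + a * b')"
  by (simp add: heis_def)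
lemma heis_one: "\<one>\<^bsub>heis\<^esub> = (0, 0, 0)" by (simp add: heis_def)
lemma heis_carrier[simp]: "carrier heis = UNIV" by (simp add: heis_def)

lemma group_heis: "group heis"
proof (rule groupI)
  fix x y z :: "int \<times> int \<times> int"
  show "x \<otimes>\<^bsub>heis\<^esub> y \<otimes>\<^bsub>heis\<^esub> z = x \<otimes>\<^bsub>heis\<^esub> (y \<otimes>\<^bsub>heis\<^esub> z)"
    by (cases x; cases y; cases z) (simp add: heis_mult algebra_simps)
next
  fix x :: "int \<times> int \<times> int"
  show "\<one>\<^bsub>heis\<^esub> \<otimes>\<^bsub>heis\<^esub> x = x" by (cases x) (simp add: heis_mult heis_one)
  show "\<exists>y\<in>carrier heis. y \<otimes>\<^bsub>heis\<^esub> x = \<one>\<^bsub>heis\<^esub>"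
  proof (cases x)
    case (fields a b c)
    show ?thesis by (rule bexI[where x = "(-a, -b, -c + a * b)"]) (simp_all add: fields heis_mult heis_one)
  qed
qed simp_all

lemma heis_inv: "inv\<^bsub>heis\<^esub> (a, b, c) = (-a, -b, -c + a * b)"
  by (rule group.inv_equality[OF group_heis]) (simp_all add: heis_mult heis_one)

lemma heis_gcomm: "gcomm heis (a, b, c) (a', b', c') = (0, 0, a * b' - a' * b)"
  by (simp add: gcomm_def heis_inv heis_mult algebra_simps)

definition ev :: "gen \<Rightarrow> gen \<Rightarrow> gen \<Rightarrow> int \<times> int \<times> int" where
  "ev p q y = ((if y = p then 1 else 0), (if y = q then 1 else 0), 0)"

definition Eh :: "gen \<Rightarrow> gen \<Rightarrow> gen fword \<Rightarrow> int \<times> int \<times> int" where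
  "Eh p q = fext heis (ev p q)"

lemma Eh_hom: "Eh p q \<in> hom (pi1 g) heis"
  unfolding Eh_def pi1_def by (rule group.fext_hom[OF group_heis]) simp

lemma Eh_comp: "fst (Eh p q w) = expsum w p \<and> fst (snd (Eh p q w)) = expsum w q"
proof (induction w)
  case Nil then show ?case by (simp add: Eh_def group.fext_Nil[OF group_heis] heis_one)
next
  case (Cons x w)
  obtain a b c where e: "Eh p q w = (a, b, c)" by (cases "Eh p q w")
  show ?case using Cons e
    by (cases x) (auto simp: Eh_def group.fext_Cons[OF group_heis] lval_def ev_def heis_inv heis_mult expsum_Cons lsgn_def)
qed

definition bprod :: "('b, 'c) monoid_scheme \<Rightarrow> (nat \<Rightarrow> 'b) \<Rightarrow> nat list \<Rightarrow> 'b" where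
  "bprod G f l = foldr (\<lambda>i acc. f i \<otimes>\<^bsub>G\<^esub> acc) l \<one>\<^bsub>G\<^esub>"

lemma bprod_Nil[simp]: "bprod G f [] = \<one>\<^bsub>G\<^esub>" by (simp add: bprod_def)
lemma bprod_Cons[simp]: "bprod G f (i # l) = f i \<otimes>\<^bsub>G\<^esub> bprod G f l" by (simp add: bprod_def)

lemma bprod_cong: "(\<And>i. i \<in> set l \<Longrightarrow> f i = f' i) \<Longrightarrow> bprod G f l = bprod G f' l"
  by (induction l) simp_all

lemma bprod_closed: "group G \<Longrightarrow> (\<And>i. i \<in> set l \<Longrightarrow> f i \<in> carrier G) \<Longrightarrow> bprod G f l \<in> carrier G"
  by (induction l) (auto simp: group.is_monoid monoid.m_closed monoid.one_closed)

lemma bprod_hom: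
  assumes G: "group G" and H: "group H" and h: "h \<in> hom G H"
    and f: "\<And>i. i \<in> set l \<Longrightarrow> f i \<in> carrier G"
  shows "h (bprod G f l) = bprod H (\<lambda>i. h (f i)) l"
  using f
proof (induction l)
  case Nil
  interpret gh: group_hom G H h using G H h by (simp add: group_hom_def group_hom_axioms_def)
  show ?case by simp
next
  case (Cons i l)
  interpret gh: group_hom G H h using G H h by (simp add: group_hom_def group_hom_axioms_def)
  have "bprod G f l \<in> carrier G" using bprod_closed[OF G] Cons.prems by simp
  then show ?case using Cons by simp
qed

lemma bprod_heis: "bprod heis (\<lambda>i. (0, 0, d i)) l = (0, 0, sum_list (map d l))"
  by (induction l) (simp_all add: heis_one heis_mult)

definition cw :: "nat \<Rightarrow> gen fword" where "cw i = wcomm (lett (A i)) (lett (B i))"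

lemma red_concat: "red (concat (map c l)) = foldr (\<lambda>i acc. red (c i @ acc)) l []"
proof (induction l)
  case (Cons i l)
  have "red (concat (map c (i # l))) = red (c i @ red (concat (map c l)))" by (simp add: red_append_right)
  then show ?case using Cons by simp
qed simp

lemma cw_carrier: "i \<in> {1..g} \<Longrightarrow> cw i \<in> carrier (pi1 g)"
  unfolding cw_def lett_def
  using wcomm_pi1[OF letter_pi1[OF A_surf] letter_pi1[OF B_surf]] by (simp add: lett_def)

lemma boundary_bprod: "boundary_word g = bprod (pi1 g) cw [1..<g+1]"
proof -
  have "\<forall>i \<in> set l. cw i \<in> carrier (pi1 g) \<Longrightarrow>
    foldr (\<lambda>i acc. red (cw i @ acc)) l [] = bprod (pi1 g) cw l" for l
    by (induction l) (simp_all add: pi1_def)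
  moreover have "\<forall>i \<in> set [1..<g+1]. cw i \<in> carrier (pi1 g)" using cw_carrier by auto
  ultimately show ?thesis unfolding boundary_word_def cw_def[symmetric] red_concat by simp
qed

definition Mx :: "(gen fword \<Rightarrow> gen fword) \<Rightarrow> gen \<Rightarrow> gen \<Rightarrow> int" where
  "Mx h x p = expsum (h [(x, True)]) p"

lemma Eh_boundary:
  assumes h: "h \<in> hom (pi1 g) (pi1 g)"
  shows "Eh p q (h (boundary_word g)) =
     (0, 0, \<Sum>i\<in>{1..g}. Mx h (A i) p * Mx h (B i) q - Mx h (B i) p * Mx h (A i) q)"
proof -
  have cwc: "\<And>i. i \<in> set [1..<g+1] \<Longrightarrow> cw i \<in> carrier (pi1 g)" using cw_carrier by auto
  have hc: "\<And>i. i \<in> set [1..<g+1] \<Longrightarrow> h (cw i) \<in> carrier (pi1 g)" using cwc hom_in_carrier[OF h] by blast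
  have "Eh p q (h (boundary_word g)) = bprod heis (\<lambda>i. Eh p q (h (cw i))) [1..<g+1]"
  proof -
    have e1: "h (bprod (pi1 g) cw [1..<g+1]) = bprod (pi1 g) (\<lambda>i. h (cw i)) [1..<g+1]"
      by (rule bprod_hom[OF group_pi1 group_pi1 h cwc])
    have e2: "Eh p q (bprod (pi1 g) (\<lambda>i. h (cw i)) [1..<g+1]) = bprod heis (\<lambda>i. Eh p q (h (cw i))) [1..<g+1]"
      by (rule bprod_hom[OF group_pi1 group_heis Eh_hom hc])
    show ?thesis unfolding boundary_bprod e1 e2 ..
  qed
  also have "\<dots> = bprod heis (\<lambda>i. (0, 0, Mx h (A i) p * Mx h (B i) q - Mx h (B i) p * Mx h (A i) q)) [1..<g+1]"
  proof (rule bprod_cong)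
    fix i assume iL: "i \<in> set [1..<g+1]"
    show "Eh p q (h (cw i)) = (0, 0, Mx h (A i) p * Mx h (B i) q - Mx h (B i) p * Mx h (A i) q)"
    proof (cases "i \<in> {1..g}")
      case True
      have la: "[(A i, True)] \<in> carrier (pi1 g)" "[(B i, True)] \<in> carrier (pi1 g)"
        using letter_pi1 A_surf B_surf True by auto
      have ha: "h [(A i, True)] \<in> carrier (pi1 g)" "h [(B i, True)] \<in> carrier (pi1 g)"
        using la hom_in_carrier[OF h] by auto
      have "cw i = gcomm (pi1 g) [(A i, True)] [(B i, True)]"
        unfolding cw_def lett_def using wcomm_gcomm[of _ "surf_gens g"] la by (simp add: pi1_def)
      then have "h (cw i) = gcomm (pi1 g) (h [(A i, True)]) (h [(B i, True)])"
        using hom_gcomm[OF group_pi1 group_pi1 h la] by simp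
      then have "Eh p q (h (cw i)) = gcomm heis (Eh p q (h [(A i, True)])) (Eh p q (h [(B i, True)]))"
        using hom_gcomm[OF group_pi1 group_heis Eh_hom ha] by simp
      also have "\<dots> = (0, 0, Mx h (A i) p * Mx h (B i) q - Mx h (B i) p * Mx h (A i) q)"
      proof -
        obtain a1 b1 c1 where e1: "Eh p q (h [(A i, True)]) = (a1, b1, c1)" by (cases "Eh p q (h [(A i, True)])")
        obtain a2 b2 c2 where e2: "Eh p q (h [(B i, True)]) = (a2, b2, c2)" by (cases "Eh p q (h [(B i, True)])")
        show ?thesis using e1 e2 Eh_comp[of p q "h [(A i, True)]"] Eh_comp[of p q "h [(B i, True)]"]
          by (simp add: heis_gcomm Mx_def)
      qed
      finally show ?thesis .
    next
      case False
      then show ?thesis using iL by auto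
    qed
  qed
  also have "\<dots> = (0, 0, \<Sum>i\<in>{1..g}. Mx h (A i) p * Mx h (B i) q - Mx h (B i) p * Mx h (A i) q)"
    unfolding bprod_heis sum_list_distinct_conv_sum_set[OF distinct_upt] set_upt
    by (simp add: atLeastLessThanSuc_atLeastAtMost)
  finally show ?thesis .
qed



section \<open>Matrix algebra over a finite index set\<close>

definition mm :: "'a set \<Rightarrow> ('a \<Rightarrow> 'a \<Rightarrow> int) \<Rightarrow> ('a \<Rightarrow> 'a \<Rightarrow> int) \<Rightarrow> 'a \<Rightarrow> 'a \<Rightarrow> int" where
  "mm S Xa Ya p r = (\<Sum>q\<in>S. Xa p q * Ya q r)"

definition Idm :: "'a \<Rightarrow> 'a \<Rightarrow> int" where "Idm p q = (if p = q then 1 else 0)"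

lemma mm_assoc: "finite S \<Longrightarrow> mm S (mm S Xa Ya) Za p r = mm S Xa (mm S Ya Za) p r"
  unfolding mm_def sum_distrib_left sum_distrib_right
  by (subst sum.swap) (simp add: mult.assoc)

lemma mm_cong: "(\<And>p q. p \<in> S \<Longrightarrow> q \<in> S \<Longrightarrow> Xa p q = Xa' p q) \<Longrightarrow> (\<And>p q. p \<in> S \<Longrightarrow> q \<in> S \<Longrightarrow> Ya p q = Ya' p q) \<Longrightarrow>
   p \<in> S \<Longrightarrow> r \<in> S \<Longrightarrow> mm S Xa Ya p r = mm S Xa' Ya' p r"
  unfolding mm_def by (rule sum.cong) auto

lemma mm_Id_left: "finite S \<Longrightarrow> p \<in> S \<Longrightarrow> mm S Idm Xa p r = Xa p r"
proof -
  assume "finite S" "p \<in> S"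
  have "mm S Idm Xa p r = (\<Sum>q\<in>S. if p = q then Xa q r else 0)"
    unfolding mm_def Idm_def by (rule sum.cong) auto
  then show ?thesis using \<open>p \<in> S\<close> \<open>finite S\<close> by simp
qed

lemma mm_Id_right: "finite S \<Longrightarrow> r \<in> S \<Longrightarrow> mm S Xa Idm p r = Xa p r"
proof -
  assume "finite S" "r \<in> S"
  have "mm S Xa Idm p r = (\<Sum>q\<in>S. if q = r then Xa p q else 0)"
    unfolding mm_def Idm_def by (rule sum.cong) auto
  then show ?thesis using \<open>r \<in> S\<close> \<open>finite S\<close> by simp
qed

lemma mm_neg_left: "mm S (\<lambda>p q. - Xa p q) Ya p r = - mm S Xa Ya p r"
  unfolding mm_def by (simp add: sum_negf)

lemma mm_neg_right: "mm S Xa (\<lambda>p q. - Ya p q) p r = - mm S Xa Ya p r"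
  unfolding mm_def by (simp add: sum_negf)

lemma symp_matrix:
  assumes S: "finite S"
    and R1: "\<And>p q. p \<in> S \<Longrightarrow> q \<in> S \<Longrightarrow> mm S (mm S T J) (\<lambda>a b. T b a) p q = J p q"
    and NT: "\<And>p q. p \<in> S \<Longrightarrow> q \<in> S \<Longrightarrow> mm S U T p q = Idm p q"
    and JJ: "\<And>p q. p \<in> S \<Longrightarrow> q \<in> S \<Longrightarrow> mm S J J p q = - Idm p q"
    and x: "x \<in> S" and y: "y \<in> S"
  shows "mm S (mm S (\<lambda>a b. T b a) J) T x y = J x y"
proof -
  let ?Tt = "\<lambda>a b. T b a"
  have s2: "mm S J ?Tt a q = mm S U J a q" if a: "a \<in> S" and q: "q \<in> S" for a q
  proof -
    have "mm S J ?Tt a q = mm S Idm (mm S J ?Tt) a q" using S a by (simp add: mm_Id_left)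
    also have "\<dots> = mm S (mm S U T) (mm S J ?Tt) a q"
      by (rule mm_cong) (use NT a q in auto)
    also have "\<dots> = mm S U (mm S T (mm S J ?Tt)) a q" by (rule mm_assoc[OF S])
    also have "\<dots> = mm S U (mm S (mm S T J) ?Tt) a q"
      by (rule mm_cong) (use a q mm_assoc[OF S] in auto)
    also have "\<dots> = mm S U J a q"
      by (rule mm_cong) (use a q R1 in auto)
    finally show ?thesis .
  qed
  have s3: "T q b = - mm S J (mm S U J) b q" if b: "b \<in> S" and q: "q \<in> S" for b q
  proof -
    have "mm S J (mm S U J) b q = mm S J (mm S J ?Tt) b q"
      by (rule mm_cong) (use b q s2 in auto)
    also have "\<dots> = mm S (mm S J J) ?Tt b q" by (rule mm_assoc[OF S, symmetric])
    also have "\<dots> = mm S (\<lambda>p q. - Idm p q) ?Tt b q"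
      by (rule mm_cong) (use b q JJ in auto)
    also have "\<dots> = - T q b" using S b by (simp add: mm_neg_left mm_Id_left)
    finally show ?thesis by simp
  qed
  let ?W = "mm S J (mm S U J)"
  have "mm S (mm S ?Tt J) T x y = mm S (mm S (\<lambda>a b. - ?W a b) J) T x y"
    by (rule mm_cong) (use s3 x y in \<open>auto intro!: mm_cong\<close>)
  also have "\<dots> = - mm S (mm S ?W J) T x y"
  proof -
    have "mm S (mm S (\<lambda>a b. - ?W a b) J) T x y = mm S (\<lambda>a b. - mm S ?W J a b) T x y"
      by (rule mm_cong) (use x y in \<open>simp_all add: mm_neg_left\<close>)
    then show ?thesis by (simp add: mm_neg_left)
  qed
  also have "mm S (mm S ?W J) T x y = mm S J (mm S U (mm S (mm S J J) T)) x y"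
  proof -
    have "mm S (mm S ?W J) T x y = mm S ?W (mm S J T) x y" by (rule mm_assoc[OF S])
    also have "\<dots> = mm S J (mm S (mm S U J) (mm S J T)) x y" by (rule mm_assoc[OF S])
    also have "\<dots> = mm S J (mm S U (mm S J (mm S J T))) x y"
      by (rule mm_cong) (use x y mm_assoc[OF S] in auto)
    also have "\<dots> = mm S J (mm S U (mm S (mm S J J) T)) x y"
    proof (rule mm_cong[OF _ _ x y])
      fix a b assume ab: "a \<in> S" "b \<in> S"
      show "mm S U (mm S J (mm S J T)) a b = mm S U (mm S (mm S J J) T) a b"
        by (rule mm_cong[OF _ _ ab]) (simp_all add: mm_assoc[OF S])
    qed simp
    finally show ?thesis .
  qed
  also have "\<dots> = mm S J (mm S U (\<lambda>a b. - T a b)) x y"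
  proof -
    have jjT: "mm S (mm S J J) T a b = - T a b" if ab: "a \<in> S" "b \<in> S" for a b
    proof -
      have "mm S (mm S J J) T a b = mm S (\<lambda>p q. - Idm p q) T a b" by (rule mm_cong) (use JJ ab in auto)
      then show ?thesis by (simp add: mm_neg_left mm_Id_left[OF S ab(1)])
    qed
    show ?thesis
    proof (rule mm_cong[OF _ _ x y])
      fix a b assume ab: "a \<in> S" "b \<in> S"
      show "mm S U (mm S (mm S J J) T) a b = mm S U (\<lambda>a b. - T a b) a b"
        by (rule mm_cong[OF _ _ ab]) (simp_all add: jjT)
    qed simp
  qed
  also have "\<dots> = - mm S J Idm x y"
    by (subst mm_cong[where Ya' = "\<lambda>a b. - Idm a b" and Xa' = J]) (use x y NT in \<open>simp_all add: mm_neg_right\<close>)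
  also have "- mm S J Idm x y = - J x y" using S y by (simp add: mm_Id_right)
  finally show ?thesis by simp
qed



lemma surf_eq: "surf_gens g = A ` {1..g} \<union> B ` {1..g}"
  by (auto simp: surf_gens_def)

lemma finite_surf: "finite (surf_gens g)" by (simp add: surf_eq)

lemma sum_surf: "(\<Sum>x\<in>surf_gens g. G x) = (\<Sum>k\<in>{1..g}. G (A k)) + (\<Sum>k\<in>{1..g}. G (B k))"
proof -
  have "(\<Sum>x\<in>surf_gens g. G x) = (\<Sum>x\<in>A ` {1..g}. G x) + (\<Sum>x\<in>B ` {1..g}. G x)"
    unfolding surf_eq by (rule sum.union_disjoint) auto
  also have "\<dots> = (\<Sum>k\<in>{1..g}. G (A k)) + (\<Sum>k\<in>{1..g}. G (B k))"
    by (simp add: sum.reindex inj_on_def)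
  finally show ?thesis .
qed

lemma Jf_A_row: "k \<in> {1..g} \<Longrightarrow> Jf g (A k) q = (if q = B k then 1 else 0)"
proof -
  assume k: "k \<in> {1..g}"
  have "Jf g (A k) q = (\<Sum>i\<in>{1..g}. if i = k then (if q = B k then 1 else 0) else 0)"
    unfolding Jf_def by (rule sum.cong) auto
  then show ?thesis using k by simp
qed

lemma Jf_B_row: "k \<in> {1..g} \<Longrightarrow> Jf g (B k) q = (if q = A k then -1 else 0)"
proof -
  assume k: "k \<in> {1..g}"
  have "Jf g (B k) q = (\<Sum>i\<in>{1..g}. if i = k then (if q = A k then -1 else 0) else 0)"
    unfolding Jf_def by (rule sum.cong) auto
  then show ?thesis using k by simp
qed

lemma conv_J:
  "(\<Sum>x\<in>surf_gens g. \<Sum>y\<in>surf_gens g. Jf g x y * F x y) = (\<Sum>i\<in>{1..g}. F (A i) (B i) - F (B i) (A i))"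
proof -
  have a: "(\<Sum>y\<in>surf_gens g. Jf g (A k) y * F (A k) y) = F (A k) (B k)" if k: "k \<in> {1..g}" for k
  proof -
    have "(\<Sum>y\<in>surf_gens g. Jf g (A k) y * F (A k) y) = (\<Sum>y\<in>surf_gens g. if y = B k then F (A k) y else 0)"
      by (rule sum.cong) (simp_all add: Jf_A_row[OF k])
    then show ?thesis using B_surf[OF k] finite_surf by simp
  qed
  have b: "(\<Sum>y\<in>surf_gens g. Jf g (B k) y * F (B k) y) = - F (B k) (A k)" if k: "k \<in> {1..g}" for k
  proof -
    have "(\<Sum>y\<in>surf_gens g. Jf g (B k) y * F (B k) y) = (\<Sum>y\<in>surf_gens g. if y = A k then - F (B k) y else 0)"
      by (rule sum.cong) (simp_all add: Jf_B_row[OF k])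
    then show ?thesis using A_surf[OF k] finite_surf by simp
  qed
  show ?thesis unfolding sum_surf[where g=g and G="\<lambda>x. \<Sum>y\<in>surf_gens g. Jf g x y * F x y"]
    using a b by (simp add: sum_subtractf sum_negf)
qed

lemma mm_mm_expand: "mm S (mm S P Q) R a c = (\<Sum>x\<in>S. \<Sum>y\<in>S. Q x y * (P a x * R y c))"
proof -
  have "mm S (mm S P Q) R a c = (\<Sum>y\<in>S. \<Sum>x\<in>S. P a x * Q x y * R y c)"
    unfolding mm_def sum_distrib_right ..
  also have "\<dots> = (\<Sum>x\<in>S. \<Sum>y\<in>S. P a x * Q x y * R y c)" by (rule sum.swap)
  also have "\<dots> = (\<Sum>x\<in>S. \<Sum>y\<in>S. Q x y * (P a x * R y c))"
    by (intro sum.cong refl) (simp add: algebra_simps)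
  finally show ?thesis .
qed

lemma JJ_surf: "p \<in> surf_gens g \<Longrightarrow> q \<in> surf_gens g \<Longrightarrow> mm (surf_gens g) (Jf g) (Jf g) p q = - Idm p q"
proof (erule surf_cases)
  fix k assume k: "k \<in> {1..g}" "p = A k" and q: "q \<in> surf_gens g"
  have "mm (surf_gens g) (Jf g) (Jf g) p q = (\<Sum>y\<in>surf_gens g. if y = B k then Jf g y q else 0)"
    unfolding mm_def by (rule sum.cong) (simp_all add: Jf_A_row[OF k(1)] k(2))
  also have "\<dots> = Jf g (B k) q" using B_surf[OF k(1)] finite_surf by simp
  finally show ?thesis using k Jf_B_row[OF k(1)] by (auto simp: Idm_def)
next
  fix k assume k: "k \<in> {1..g}" "p = B k" and q: "q \<in> surf_gens g"
  have "mm (surf_gens g) (Jf g) (Jf g) p q = (\<Sum>y\<in>surf_gens g. if y = A k then - Jf g y q else 0)"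
    unfolding mm_def by (rule sum.cong) (simp_all add: Jf_B_row[OF k(1)] k(2))
  also have "\<dots> = - Jf g (A k) q" using A_surf[OF k(1)] finite_surf by simp
  finally show ?thesis using k Jf_A_row[OF k(1)] by (auto simp: Idm_def)
qed

lemma expsum_mult_P: "u \<in> carrier (pi1 g) \<Longrightarrow> v \<in> carrier (pi1 g) \<Longrightarrow>
   expsum (u \<otimes>\<^bsub>pi1 g\<^esub> v) p = expsum u p + expsum v p"
  by (simp add: pi1_def expsum_red expsum_append)

lemma linearity:
  assumes h: "h \<in> hom (pi1 g) (pi1 g)" and u: "u \<in> carrier (pi1 g)"
  shows "expsum (h u) p = (\<Sum>x\<in>surf_gens g. expsum u x * Mx h x p)"
proof -
  interpret P: group "pi1 g" by (rule group_pi1)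
  interpret hh: group_hom "pi1 g" "pi1 g" h using h group_pi1 by (simp add: group_hom_def group_hom_axioms_def)
  show ?thesis using u[unfolded pi1_def]
  proof (induction rule: free_group_induct)
    case Nil
    have "h [] = []" using hh.hom_one by (simp add: pi1_def)
    then show ?case by simp
  next
    case (Cons x w)
    have xl: "[x] \<in> carrier (pi1 g)" using Cons by (simp add: pi1_def letter_in_free)
    have wc: "w \<in> carrier (pi1 g)" using Cons by (simp add: pi1_def)
    have e: "red (x # w) = [x] \<otimes>\<^bsub>pi1 g\<^esub> w" by (simp add: pi1_def)
    have hx: "expsum (h [x]) p = (\<Sum>z\<in>surf_gens g. lsgn x z * Mx h z p)"
    proof -
      have "(\<Sum>z\<in>surf_gens g. lsgn x z * Mx h z p) = (\<Sum>z\<in>surf_gens g. if z = fst x then (if snd x then 1 else -1) * Mx h (fst x) p else 0)"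
        by (rule sum.cong) (auto simp: lsgn_def)
      also have "\<dots> = (if snd x then 1 else -1) * Mx h (fst x) p" using Cons finite_surf by simp
      also have "\<dots> = expsum (h [x]) p"
      proof (cases "snd x")
        case True then show ?thesis by (cases x) (simp add: Mx_def)
      next
        case False
        obtain y where xy: "x = (y, False)" "y \<in> surf_gens g" using False Cons by (cases x) auto
        have yl: "[(y, True)] \<in> carrier (pi1 g)" using xy by (simp add: letter_pi1)
        have "[x] = inv\<^bsub>pi1 g\<^esub> [(y, True)]" using inv_letter[of y "surf_gens g"] xy by (simp add: pi1_def)
        then have "h [x] = inv\<^bsub>pi1 g\<^esub> (h [(y, True)])" using yl by simp
        also have "\<dots> = red (winv (h [(y, True)]))" using hom_in_carrier[OF h yl] by (simp add: pi1_def inv_free)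
        finally have "expsum (h [x]) p = - expsum (h [(y, True)]) p" by (simp add: expsum_red expsum_winv)
        then show ?thesis using xy by (simp add: Mx_def)
      qed
      finally show ?thesis by simp
    qed
    have "expsum (h (red (x # w))) p = expsum (h [x]) p + expsum (h w) p"
      unfolding e using hh.hom_mult[OF xl wc] hom_in_carrier[OF h xl] hom_in_carrier[OF h wc]
      by (simp add: expsum_mult_P)
    also have "\<dots> = (\<Sum>z\<in>surf_gens g. (lsgn x z + expsum w z) * Mx h z p)"
      using hx Cons.IH by (simp add: distrib_right sum.distrib)
    also have "\<dots> = (\<Sum>z\<in>surf_gens g. expsum (red (x # w)) z * Mx h z p)"
      by (simp add: expsum_red expsum_Cons)
    finally show ?case .
  qed
qed



lemma id_hom_pi1: "(\<lambda>w. w) \<in> hom (pi1 g) (pi1 g)"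
  by (rule homI) simp_all

lemma boundary_carrier: "boundary_word g \<in> carrier (pi1 g)"
  unfolding boundary_bprod by (rule bprod_closed[OF group_pi1]) (use cw_carrier in auto)

lemma mcg_props:
  assumes psi: "\<psi> \<in> mcg_action g"
  shows "\<psi> \<in> hom (pi1 g) (pi1 g)" "\<psi> (boundary_word g) = boundary_word g"
    "inv_into (carrier (pi1 g)) \<psi> \<in> mcg_action g"
    "\<And>u. u \<in> carrier (pi1 g) \<Longrightarrow> inv_into (carrier (pi1 g)) \<psi> (\<psi> u) = u"
    "\<And>u. u \<in> carrier (pi1 g) \<Longrightarrow> \<psi> (inv_into (carrier (pi1 g)) \<psi> u) = u"
proof -
  have iso: "\<psi> \<in> iso (pi1 g) (pi1 g)" and bw: "\<psi> (boundary_word g) = boundary_word g"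
    using psi by (auto simp: mcg_action_def)
  have bij: "bij_betw \<psi> (carrier (pi1 g)) (carrier (pi1 g))" using iso by (simp add: iso_def)
  show "\<psi> \<in> hom (pi1 g) (pi1 g)" using iso by (simp add: iso_def)
  show "\<psi> (boundary_word g) = boundary_word g" by (rule bw)
  show inv1: "\<And>u. u \<in> carrier (pi1 g) \<Longrightarrow> inv_into (carrier (pi1 g)) \<psi> (\<psi> u) = u"
    using bij by (simp add: bij_betw_def inv_into_f_f)
  show "\<And>u. u \<in> carrier (pi1 g) \<Longrightarrow> \<psi> (inv_into (carrier (pi1 g)) \<psi> u) = u"
    using bij by (simp add: bij_betw_def f_inv_into_f)
  have "inv_into (carrier (pi1 g)) \<psi> \<in> iso (pi1 g) (pi1 g)"
    by (rule group.iso_set_sym[OF group_pi1 iso])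
  moreover have "inv_into (carrier (pi1 g)) \<psi> (boundary_word g) = boundary_word g"
    using inv1[OF boundary_carrier] bw by simp
  ultimately show "inv_into (carrier (pi1 g)) \<psi> \<in> mcg_action g" by (simp add: mcg_action_def)
qed

lemma Mx_id: "Mx (\<lambda>w. w) x p = (if x = p then 1 else 0)"
  by (simp add: Mx_def expsum_letter)

lemma symp:
  assumes psi: "\<psi> \<in> mcg_action g" and x: "x \<in> surf_gens g" and y: "y \<in> surf_gens g"
  shows "omega g (\<psi> [(x, True)]) (\<psi> [(y, True)]) = Jf g x y"
proof -
  let ?S = "surf_gens g"
  let ?pi = "inv_into (carrier (pi1 g)) \<psi>"
  let ?T = "\<lambda>p a. Mx \<psi> a p"
  let ?U = "\<lambda>p a. Mx ?pi a p"
  let ?J = "Jf g"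
  have h: "\<psi> \<in> hom (pi1 g) (pi1 g)" using mcg_props[OF psi] by simp
  have hi: "?pi \<in> hom (pi1 g) (pi1 g)" using mcg_props(1)[OF mcg_props(3)[OF psi]] .
  have R0: "(\<Sum>i\<in>{1..g}. Mx \<psi> (A i) p * Mx \<psi> (B i) q - Mx \<psi> (B i) p * Mx \<psi> (A i) q) = Jf g p q" for p q
  proof -
    have "Eh p q (\<psi> (boundary_word g)) = Eh p q ((\<lambda>w. w) (boundary_word g))" using mcg_props(2)[OF psi] by simp
    then have "(\<Sum>i\<in>{1..g}. Mx \<psi> (A i) p * Mx \<psi> (B i) q - Mx \<psi> (B i) p * Mx \<psi> (A i) q) =
      (\<Sum>i\<in>{1..g}. Mx (\<lambda>w. w) (A i) p * Mx (\<lambda>w. w) (B i) q - Mx (\<lambda>w. w) (B i) p * Mx (\<lambda>w. w) (A i) q)"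
      unfolding Eh_boundary[OF h] Eh_boundary[OF id_hom_pi1] by simp
    also have "\<dots> = Jf g p q" unfolding Jf_def Mx_id by (rule sum.cong) auto
    finally show ?thesis .
  qed
  have R1: "mm ?S (mm ?S ?T ?J) (\<lambda>a b. ?T b a) p q = ?J p q" if "p \<in> ?S" "q \<in> ?S" for p q
    unfolding mm_mm_expand conv_J[where F = "\<lambda>a b. Mx \<psi> a p * Mx \<psi> b q"] by (rule R0)
  have NT: "mm ?S ?U ?T p q = Idm p q" if p: "p \<in> ?S" and q: "q \<in> ?S" for p q
  proof -
    have ql: "[(q, True)] \<in> carrier (pi1 g)" using q by (rule letter_pi1)
    have "expsum (?pi (\<psi> [(q, True)])) p = (\<Sum>a\<in>?S. expsum (\<psi> [(q, True)]) a * Mx ?pi a p)"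
      by (rule linearity[OF hi hom_in_carrier[OF h ql]])
    moreover have "?pi (\<psi> [(q, True)]) = [(q, True)]" using mcg_props(4)[OF psi ql] .
    ultimately have "(if q = p then 1 else 0) = (\<Sum>a\<in>?S. Mx \<psi> q a * Mx ?pi a p)"
      by (simp add: expsum_letter Mx_def)
    then show ?thesis unfolding mm_def Idm_def by (simp add: mult.commute eq_commute)
  qed
  have "mm ?S (mm ?S (\<lambda>a b. ?T b a) ?J) ?T x y = ?J x y"
    by (rule symp_matrix[OF finite_surf R1 NT JJ_surf x y])
  then have "(\<Sum>i\<in>{1..g}. Mx \<psi> x (A i) * Mx \<psi> y (B i) - Mx \<psi> x (B i) * Mx \<psi> y (A i)) = Jf g x y"
    unfolding mm_mm_expand conv_J[where F = "\<lambda>a b. Mx \<psi> x a * Mx \<psi> y b"] .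
  then show ?thesis by (simp add: omega_def Mx_def)
qed

lemma Hclass_pi1: "w \<in> carrier (pi1 g) \<Longrightarrow> phi1 g w = iota g w"
  using Hclass_iota pi1_sub by (auto simp: phi1_def)

lemma ker_sub:
  assumes psi: "\<psi> \<in> mcg_action g"
  shows "\<psi> ` kernel (pi1 g) (Hgrp g) (phi1 g) \<subseteq> kernel (pi1 g) (Hgrp g) (phi1 g)"
proof -
  interpret H: group "Hgrp g" by (rule group_H)
  have h: "\<psi> \<in> hom (pi1 g) (pi1 g)" using mcg_props[OF psi] by simp
  define tf where "tf y = (if y = Sig then sigH g else iota g (\<psi> [(y, True)]))" for y
  have tfS: "tf y = iota g (\<psi> [(y, True)])" if "y \<in> surf_gens g" for y
    using that Sig_notin_surf by (auto simp: tf_def)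
  have psil: "\<psi> [(y, True)] \<in> carrier (pi1 g)" if "y \<in> surf_gens g" for y
    using hom_in_carrier[OF h letter_pi1[OF that]] .
  have tfc: "tf ` Hg_gens g \<subseteq> carrier (Hgrp g)"
  proof
    fix z assume "z \<in> tf ` Hg_gens g"
    then obtain y where y: "y \<in> Hg_gens g" "z = tf y" by blast
    show "z \<in> carrier (Hgrp g)"
    proof (cases "y = Sig")
      case True then show ?thesis using y sigH_carrier by (simp add: tf_def)
    next
      case False then have "y \<in> surf_gens g" using y by (simp add: Hg_gens_def)
      then show ?thesis using y tfS hom_in_carrier[OF iotaP psil] by simp
    qed
  qed
  define t0 where "t0 = fext (Hgrp g) tf"
  have t0hom: "t0 \<in> hom (FH g) (Hgrp g)" unfolding t0_def FH_def by (rule group.fext_hom[OF group_H tfc])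
  have t0kills: "t0 n = \<one>\<^bsub>Hgrp g\<^esub>" if n: "n \<in> NH g" for n
  proof (rule nc_kills[OF group_FH group_H t0hom rels_carrier _ n[unfolded NH_def]])
    fix s assume "s \<in> red ` Hg_rels g"
    then obtain r where r: "r \<in> Hg_rels g" "s = red r" by blast
    have "fext (Hgrp g) tf (red r) = \<one>\<^bsub>Hgrp g\<^esub>"
    proof (rule rels_killed[OF group_H tfc _ _ r(1)])
      fix x assume x: "x \<in> surf_gens g"
      have ic: "iota g (\<psi> [(x, True)]) \<in> carrier (Hgrp g)" using hom_in_carrier[OF iotaP psil[OF x]] .
      have "sigH g \<otimes>\<^bsub>Hgrp g\<^esub> iota g (\<psi> [(x, True)]) = \<one>\<^bsub>Hgrp g\<^esub> \<otimes>\<^bsub>Hgrp g\<^esub> (iota g (\<psi> [(x, True)]) \<otimes>\<^bsub>Hgrp g\<^esub> sigH g)"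
        using H.central_comm[OF sigH_central ic] ic sigH_carrier by simp
      then show "gcomm (Hgrp g) (tf Sig) (tf x) = \<one>\<^bsub>Hgrp g\<^esub>"
        using H.gcomm_eq[OF sigH_carrier ic H.one_closed] tfS[OF x] by (simp add: tf_def)
    next
      fix x y assume x: "x \<in> surf_gens g" and y: "y \<in> surf_gens g"
      have "gcomm (Hgrp g) (iota g (\<psi> [(x, True)])) (iota g (\<psi> [(y, True)])) =
          sigH g [^]\<^bsub>Hgrp g\<^esub> (2 * omega g (\<psi> [(x, True)]) (\<psi> [(y, True)]))"
        by (rule KEY1[OF psil[OF x] psil[OF y]])
      then show "gcomm (Hgrp g) (tf x) (tf y) = tf Sig [^]\<^bsub>Hgrp g\<^esub> (2 * Jf g x y)"
        using symp[OF psi x y] tfS[OF x] tfS[OF y] by (simp add: tf_def)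
    qed
    then show "t0 s = \<one>\<^bsub>Hgrp g\<^esub>" using r by (simp add: t0_def)
  qed
  define tb where "tb Z = the_elem (t0 ` Z)" for Z
  have tbhom0: "(\<lambda>Z. the_elem (t0 ` Z)) \<in> hom (FH g Mod NH g) (Hgrp g)"
    by (rule quot_hom(1)[OF NH_normal group_H t0hom t0kills])
  have tbhom: "tb \<in> hom (Hgrp g) (Hgrp g)"
    using tbhom0 unfolding tb_def[abs_def] Hgrp_eq[symmetric] .
  have tbiota: "tb (iota g w) = t0 w" if "w \<in> carrier (FH g)" for w
    unfolding tb_def iota_def by (rule quot_hom(2)[OF NH_normal group_H t0hom t0kills that])
  have agree: "iota g (\<psi> w) = t0 w" if w: "w \<in> carrier (pi1 g)" for w
  proof (rule free_hom_unique[OF group_H])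
    show "(\<lambda>w. iota g (\<psi> w)) \<in> hom (free_group (surf_gens g)) (Hgrp g)"
      using hom_compose[OF h iotaP] by (simp add: pi1_def comp_def)
    show "t0 \<in> hom (free_group (surf_gens g)) (Hgrp g)"
      using hom_restrict_pi1[OF t0hom] by (simp add: pi1_def)
    show "w \<in> carrier (free_group (surf_gens g))" using w by (simp add: pi1_def)
    fix y assume y: "y \<in> surf_gens g"
    have "t0 [(y, True)] = tf y" unfolding t0_def
      by (rule group.fext_letter[OF group_H tfc]) (use y surf_sub in blast)
    then show "iota g (\<psi> [(y, True)]) = t0 [(y, True)]" using tfS[OF y] by simp
  qed
  show ?thesis
  proof
    fix z assume "z \<in> \<psi> ` kernel (pi1 g) (Hgrp g) (phi1 g)"
    then obtain w where w: "w \<in> carrier (pi1 g)" "phi1 g w = \<one>\<^bsub>Hgrp g\<^esub>" "z = \<psi> w"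
      by (auto simp: kernel_def)
    have wF: "w \<in> carrier (FH g)" using w pi1_sub by blast
    have iw: "iota g w = \<one>\<^bsub>Hgrp g\<^esub>" using w Hclass_pi1 by simp
    have "iota g (\<psi> w) = tb (iota g w)" using agree[OF w(1)] tbiota[OF wF] by simp
    also have "\<dots> = \<one>\<^bsub>Hgrp g\<^esub>" using iw group_hom.hom_one[of "Hgrp g" "Hgrp g" tb] tbhom group_H
      by (simp add: group_hom_def group_hom_axioms_def)
    finally have "phi1 g (\<psi> w) = \<one>\<^bsub>Hgrp g\<^esub>" using Hclass_pi1 hom_in_carrier[OF h w(1)] by simp
    then show "z \<in> kernel (pi1 g) (Hgrp g) (phi1 g)" using w hom_in_carrier[OF h w(1)] by (simp add: kernel_def)
  qed
qed

lemma ker_eq: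
  assumes psi: "\<psi> \<in> mcg_action g"
  shows "\<psi> ` kernel (pi1 g) (Hgrp g) (phi1 g) = kernel (pi1 g) (Hgrp g) (phi1 g)"
proof
  show "\<psi> ` kernel (pi1 g) (Hgrp g) (phi1 g) \<subseteq> kernel (pi1 g) (Hgrp g) (phi1 g)" by (rule ker_sub[OF psi])
  show "kernel (pi1 g) (Hgrp g) (phi1 g) \<subseteq> \<psi> ` kernel (pi1 g) (Hgrp g) (phi1 g)"
  proof
    fix w assume w: "w \<in> kernel (pi1 g) (Hgrp g) (phi1 g)"
    let ?pi = "inv_into (carrier (pi1 g)) \<psi>"
    have "?pi w \<in> kernel (pi1 g) (Hgrp g) (phi1 g)" using ker_sub[OF mcg_props(3)[OF psi]] w by blast
    moreover have "w = \<psi> (?pi w)" using mcg_props(5)[OF psi] w by (simp add: kernel_def)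
    ultimately show "w \<in> \<psi> ` kernel (pi1 g) (Hgrp g) (phi1 g)" by blast
  qed
qed

theorem mainTheorem5:
  fixes g :: nat
  assumes "g \<ge> 1"
  shows "(\<exists>h \<in> iso (Qgrp g) (Hgrp g).
            (\<forall>i \<in> {1..g}. h (Qclass g (lett (A i), 0)) = Hclass g (lett (A i))
                        \<and> h (Qclass g (lett (B i), 0)) = Hclass g (lett (B i)))
          \<and> h (Qclass g ([], 1)) = Hclass g (lett Sig))
       \<and> (\<forall>\<psi> \<in> mcg_action g. \<psi> ` kernel (pi1 g) (Hgrp g) (phi1 g) = kernel (pi1 g) (Hgrp g) (phi1 g))"
proof (intro conjI ballI bexI)
  interpret H: group "Hgrp g" by (rule group_H)
  have gen: "PhiQ g (Qclass g (lett x, 0)) = Hclass g (lett x)" if x: "x \<in> surf_gens g" for x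
  proof -
    have xl: "lett x \<in> carrier (pi1 g)" using letter_pi1[OF x] by (simp add: lett_def)
    have "PhiQ g (Qclass g (lett x, 0)) = Phi0 g (lett x, 0)"
      unfolding Qclass_cQ by (rule PhiQ_cQ) (simp add: carrier_PxS xl)
    also have "\<dots> = iota g (lett x)" using hom_in_carrier[OF iotaP xl] by (simp add: Phi0_def)
    also have "\<dots> = Hclass g (lett x)" using Hclass_iota pi1_sub xl by auto
    finally show ?thesis .
  qed
  fix i assume i: "i \<in> {1..g}"
  show "PhiQ g (Qclass g (lett (A i), 0)) = Hclass g (lett (A i))" by (rule gen[OF A_surf[OF i]])
  show "PhiQ g (Qclass g (lett (B i), 0)) = Hclass g (lett (B i))" by (rule gen[OF B_surf[OF i]])
next
  interpret H: group "Hgrp g" by (rule group_H)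
  have "PhiQ g (Qclass g ([], 1)) = Phi0 g ([], 1)" unfolding Qclass_cQ by (rule PhiQ_cQ[OF nil_PxS])
  also have "\<dots> = iota g [] \<otimes>\<^bsub>Hgrp g\<^esub> sigH g" using sigH_carrier by (simp add: Phi0_def)
  also have "iota g [] = \<one>\<^bsub>Hgrp g\<^esub>"
    using group_hom.hom_one[of "FH g" "Hgrp g" "iota g"] iota_hom group_FH group_H
    by (simp add: group_hom_def group_hom_axioms_def FH_def)
  also have "\<one>\<^bsub>Hgrp g\<^esub> \<otimes>\<^bsub>Hgrp g\<^esub> sigH g = Hclass g (lett Sig)"
    using sigH_carrier Hclass_iota[OF letter_FH[OF Sig_Hg]] by (simp add: sigH_def aH_def lett_def)
  finally show "PhiQ g (Qclass g ([], 1)) = Hclass g (lett Sig)" .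
next
  show "PhiQ g \<in> iso (Qgrp g) (Hgrp g)" by (rule PhiQ_iso)
next
  fix \<psi> assume "\<psi> \<in> mcg_action g"
  then show "\<psi> ` kernel (pi1 g) (Hgrp g) (phi1 g) = kernel (pi1 g) (Hgrp g) (phi1 g)" by (rule ker_eq)
qed


end
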